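(* Let $G$ be a triangle-free graph on $n$ vertices. Then $\tilde b(G)\le\Gamma_4^n$, where $\Gamma_4\approx1.2434$ is the unique root in $[1,2]$ of $x^8-x^3-x^2-x-1=0$.
   Context: $\mathrm{Ind}(G)$ is the independence complex of $G$ (including the empty face), and $\tilde b(G)=\sum_{i\ge-1}\dim_{\mathbb{K}}\widetilde H_i(\mathrm{Ind}(G);\mathbb{K})$ for a fixed field $\mathbb{K}$; the empty graph has $\tilde b=1$. *)

theory Defs
  imports Complex_Main "HOL-Library.Function_Algebras"
begin

definition simple_graph :: "'a set \<Rightarrow> ('a \<Rightarrow> 'a \<Rightarrow> bool) \<Rightarrow> bool" where
  "simple_graph V E \<longleftrightarrow> finite V \<and> (\<forall>x y. E x y \<longrightarrow> E y x) \<and> (\<forall>x. \<not> E x x)"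

definition triangle_free :: "'a set \<Rightarrow> ('a \<Rightarrow> 'a \<Rightarrow> bool) \<Rightarrow> bool" where
  "triangle_free V E \<longleftrightarrow>
     \<not> (\<exists>x\<in>V. \<exists>y\<in>V. \<exists>z\<in>V. E x y \<and> E y z \<and> E x z)"

definition ind_faces :: "'a set \<Rightarrow> ('a \<Rightarrow> 'a \<Rightarrow> bool) \<Rightarrow> 'a set set" where
  "ind_faces V E = {S. S \<subseteq> V \<and> (\<forall>x\<in>S. \<forall>y\<in>S. \<not> E x y)}"

text \<open>Augmented (reduced) simplicial chains with coefficients in a field 'k:
  k-chains are 'k-valued functions supported on faces with k vertices
  (i.e. of dimension k-1; k = 0 is the empty face, degree -1).\<close>
definition ind_chains :: "'a set \<Rightarrow> ('a \<Rightarrow> 'a \<Rightarrow> bool) \<Rightarrow> nat \<Rightarrow> ('a set \<Rightarrow> 'k::field) set" where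
  "ind_chains V E k = {f. \<forall>\<sigma>. f \<sigma> \<noteq> 0 \<longrightarrow> \<sigma> \<in> ind_faces V E \<and> card \<sigma> = k}"

text \<open>Simplicial boundary, vertices ordered by the linear order of 'a:
  the coefficient of sigma - {v} in the boundary of sigma is (-1)^(position of v in sigma).\<close>
definition ind_boundary :: "'a::linorder set \<Rightarrow> ('a set \<Rightarrow> 'k::field) \<Rightarrow> ('a set \<Rightarrow> 'k)" where
  "ind_boundary V f = (\<lambda>\<tau>. \<Sum>v\<in>V - \<tau>. (-1) ^ card {u\<in>\<tau>. u < v} * f (insert v \<tau>))"

abbreviation chain_dim :: "('a set \<Rightarrow> 'k::field) set \<Rightarrow> nat" where
  "chain_dim S \<equiv> vector_space.dim (\<lambda>(c::'k) f. (\<lambda>x. c * f x)) S"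

text \<open>Reduced Betti number in degree k-1: dim ker(d_k) - dim im(d_(k+1)).\<close>
definition red_betti :: "'k::field itself \<Rightarrow> 'a::linorder set \<Rightarrow> ('a \<Rightarrow> 'a \<Rightarrow> bool) \<Rightarrow> nat \<Rightarrow> nat" where
  "red_betti _ V E k =
     chain_dim {f :: 'a set \<Rightarrow> 'k. f \<in> ind_chains V E k \<and> ind_boundary V f = 0}
     - chain_dim (ind_boundary V ` (ind_chains V E (Suc k) :: ('a set \<Rightarrow> 'k) set))"

definition total_red_betti :: "'k::field itself \<Rightarrow> 'a::linorder set \<Rightarrow> ('a \<Rightarrow> 'a \<Rightarrow> bool) \<Rightarrow> nat" where
  "total_red_betti K V E = (\<Sum>k\<in>{0..card V}. red_betti K V E k)"

definition Gamma4 :: real where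
  "Gamma4 = (THE x. 1 \<le> x \<and> x \<le> 2 \<and> x ^ 8 - x ^ 3 - x ^ 2 - x - 1 = 0)"

end

theory Submission
  imports Defs
begin

lemma mono_aux: fixes a b :: real assumes "1 \<le> a" "1 \<le> b" "i \<le> k" shows "b^i \<le> b^k * a^j"
proof -
  have "b^i \<le> b^k" using assms by (simp add: power_increasing)
  also have "\<dots> \<le> b^k * a^j" using assms by (simp add: one_le_power)
  finally show ?thesis .
qed
lemma pmono: fixes a b :: real assumes "1 \<le> a" "a < b" shows "a^8 - a^3 - a^2 - a - 1 < b^8 - b^3 - b^2 - b - 1"
proof -
  have e1: "b^8 - a^8 = (b - a) * (b^7 + b^6*a + b^5*a^2 + b^4*a^3 + b^3*a^4+b^2*a^5+b*a^6+a^7)" by algebra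
  have e2: "b^3 - a^3 + (b^2-a^2) + (b-a) = (b-a) * (b^2+b*a+a^2 + b + a + 1)" by algebra
  have b1: "1 < b" using assms by simp
  have h1: "b^2 < b^7" using b1 by (simp add: power_strict_increasing)
  have "b \<le> b^6" using mono_aux[of a b 1 6 0] assms by simp
  hence h2: "b*a \<le> b^6*a" using assms by (simp add: mult_right_mono)
  have "1 \<le> b^5" using mono_aux[of a b 0 5 0] assms by simp
  hence h3: "a^2 \<le> b^5*a^2" using assms by (simp add: mult_right_mono)
  have h4: "b \<le> b^4*a^3" using mono_aux[of a b 1 4 3] assms by simp
  have "a \<le> a^4" using mono_aux[of b a 1 4 0] assms by simp
  moreover have "a^4 \<le> b^3*a^4" using mono_aux[of a b 0 3 0] assms by (simp add: mult_right_mono)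
  ultimately have h5: "a \<le> b^3*a^4" by linarith
  have h6: "1 \<le> b^2*a^5" using mono_aux[of a b 0 2 5] assms by simp
  have h7: "0 \<le> b*a^6 + a^7" using b1 assms by simp
  have "b^2+b*a+a^2 + b + a + 1 < b^7 + b^6*a + b^5*a^2 + b^4*a^3 + b^3*a^4+b^2*a^5+b*a^6+a^7"
    using h1 h2 h3 h4 h5 h6 h7 by linarith
  hence "(b-a) * (b^2+b*a+a^2 + b + a + 1) < (b - a) * (b^7 + b^6*a + b^5*a^2 + b^4*a^3 + b^3*a^4+b^2*a^5+b*a^6+a^7)"
    using assms by (intro mult_strict_left_mono) auto
  thus ?thesis using e1 e2 by linarith
qed

lemma gamma4_props: "1.243 \<le> Gamma4 \<and> Gamma4 \<le> 1.2435 \<and> Gamma4^8 = Gamma4^3 + Gamma4^2 + Gamma4 + 1"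
proof -
  define p where "p = (\<lambda>x::real. x^8 - x^3 - x^2 - x - 1)"
  have "\<exists>x\<ge>1.243. x \<le> 1.2435 \<and> p x = 0"
    by (rule IVT) (auto simp: p_def power_divide intro!: continuous_intros)
  then obtain r where r: "1.243 \<le> r" "r \<le> 1.2435" "p r = 0" by blast
  have uniq: "z = r" if "1 \<le> z" "z \<le> 2" "p z = 0" for z
  proof (rule ccontr)
    assume "z \<noteq> r"
    hence "z < r \<or> r < z" by linarith
    thus False using pmono[of z r] pmono[of r z] that r unfolding p_def by auto
  qed
  have "Gamma4 = r" unfolding Gamma4_def
    by (rule the_equality) (use r uniq in \<open>auto simp: p_def\<close>)
  thus ?thesis using r by (simp add: p_def)
qed

definition yy :: real where "yy = 1 / Gamma4"

lemma x_ge1: "1 \<le> Gamma4" using gamma4_props by simp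
lemma x_pos: "0 < Gamma4" using gamma4_props by simp

lemma yy_bounds: "0.8 \<le> yy \<and> yy \<le> 0.8046"
proof -
  have a: "1.243 \<le> Gamma4" "Gamma4 \<le> 1.2435" using gamma4_props by auto
  have "1 / Gamma4 \<le> 1 / 1.243" using a by (intro divide_left_mono) auto
  moreover have "1 / 1.2435 \<le> 1 / Gamma4" using a by (intro divide_left_mono) auto
  ultimately show ?thesis unfolding yy_def by auto
qed

lemma yy_ident: "yy^5 + yy^6 + yy^7 + yy^8 = 1"
proof -
  have e: "Gamma4^8 = Gamma4^3 + Gamma4^2 + Gamma4 + 1" using gamma4_props by simp
  have xy: "Gamma4 * yy = 1" unfolding yy_def using x_pos by simp
  have "(Gamma4*yy)^8 = (Gamma4^3 + Gamma4^2 + Gamma4 + 1) * yy^8" using e by (simp add: power_mult_distrib)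
  also have "\<dots> = (Gamma4*yy)^3 * yy^5 + (Gamma4*yy)^2 * yy^6 + (Gamma4*yy) * yy^7 + yy^8"
    by algebra
  finally show ?thesis using xy by simp
qed

lemma yy_pos: "0 < yy" using yy_bounds by simp
lemma yy_le1: "yy \<le> 1" using yy_bounds by simp

lemma mono_poly: "0 \<le> a \<Longrightarrow> a \<le> b \<Longrightarrow> a^n \<le> (b::real)^n" by (rule power_mono)

lemma num_c1: "yy^3 + yy^4 \<le> 1"
proof -
  have "yy^3 + yy^4 \<le> 0.8046^3 + 0.8046^4" using yy_bounds yy_pos
    by (intro add_mono power_mono) auto
  also have "\<dots> \<le> 1" by (simp add: power_divide)
  finally show ?thesis .
qed

lemma num_c2: "yy^2 \<le> yy^3 + yy^4"
proof -
  have "1 \<le> yy + yy^2"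
  proof -
    have "0.8^2 \<le> yy^2" using yy_bounds by (intro power_mono) auto
    thus ?thesis using yy_bounds by (simp add: power2_eq_square)
  qed
  hence "yy^2 * 1 \<le> yy^2 * (yy + yy^2)" using yy_pos by (intro mult_left_mono) auto
  thus ?thesis by (simp add: algebra_simps power_add[symmetric] eval_nat_numeral)
qed

lemma num_c3: "2 * yy^5 + yy^6 \<le> 1"
proof -
  have "2*yy^5 + yy^6 \<le> 2*0.8046^5 + 0.8046^6" using yy_bounds yy_pos
    by (intro add_mono mult_left_mono power_mono) auto
  also have "\<dots> \<le> 1" by (simp add: power_divide)
  finally show ?thesis .
qed

lemma num_c4: "(yy^3 + yy^4) * yy^4 + (yy^3 + yy^4) * yy^5 + yy^6 \<le> 1"
proof -
  have "(yy^3 + yy^4) * yy^4 + (yy^3 + yy^4) * yy^5 + yy^6 = yy^7 + 2*yy^8 + yy^9 + yy^6"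
    by (simp add: algebra_simps power_add[symmetric])
  also have "\<dots> \<le> 0.8046^7 + 2*0.8046^8 + 0.8046^9 + 0.8046^6" using yy_bounds yy_pos
    by (intro add_mono mult_left_mono power_mono) auto
  also have "\<dots> \<le> 1" by (simp add: power_divide)
  finally show ?thesis .
qed

lemma num_c5: "yy + yy^10 \<le> 1"
proof -
  have "yy + yy^10 \<le> 0.8046 + 0.8046^10" using yy_bounds yy_pos
    by (intro add_mono power_mono) auto
  also have "\<dots> \<le> 1" by (simp add: power_divide)
  finally show ?thesis .
qed

definition gsum :: "nat \<Rightarrow> real" where "gsum d = (\<Sum>i<d. yy^(i+1+d))"

lemma gsum_step: "gsum (Suc d) = yy * (gsum d + yy^(2*d+1))"
proof -
  have "gsum (Suc d) = (\<Sum>i<d. yy * yy^(i+1+d)) + yy * yy^(2*d+1)"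
    unfolding gsum_def by (simp add: lessThan_Suc mult_2 power_add power_Suc)
  thus ?thesis unfolding gsum_def by (simp add: sum_distrib_left distrib_left)
qed

lemma gsum_le: "4 \<le> d \<Longrightarrow> gsum d \<le> 1"
proof (induction d rule: dec_induct)
  case base
  have "gsum 4 = yy^5 + yy^6 + yy^7 + yy^8" unfolding gsum_def by (simp add: eval_nat_numeral)
  thus ?case using yy_ident by simp
next
  case (step d)
  have "yy^(2*d+1) \<le> yy^9" using step yy_pos yy_le1 by (intro power_decreasing) auto
  hence "gsum d + yy^(2*d+1) \<le> 1 + yy^9" using step by simp
  hence "yy * (gsum d + yy^(2*d+1)) \<le> yy * (1 + yy^9)" using yy_pos by (intro mult_left_mono) auto
  also have "\<dots> = yy + yy^10" by (simp add: distrib_left eval_nat_numeral)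
  also have "\<dots> \<le> 1" by (rule num_c5)
  finally show ?case using gsum_step by simp
qed

lemma pow_bound: "a + k \<le> n \<Longrightarrow> Gamma4^a \<le> Gamma4^n * yy^k"
proof -
  assume h: "a + k \<le> n"
  have "Gamma4^n * yy^k = Gamma4^(n-k) * (Gamma4*yy)^k"
    using h by (simp add: power_mult_distrib power_add[symmetric] mult.assoc)
  also have "\<dots> = Gamma4^(n-k)" using x_pos by (simp add: yy_def)
  finally show ?thesis using h x_ge1 by (simp add: power_increasing)
qed

definition nbr :: "('a \<Rightarrow> 'a \<Rightarrow> bool) \<Rightarrow> 'a set \<Rightarrow> 'a \<Rightarrow> 'a set" where
  "nbr E W v = {u\<in>W. E v u}"
definition deg :: "('a \<Rightarrow> 'a \<Rightarrow> bool) \<Rightarrow> 'a set \<Rightarrow> 'a \<Rightarrow> nat" where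
  "deg E W v = card (nbr E W v)"
definition del :: "('a \<Rightarrow> 'a \<Rightarrow> bool) \<Rightarrow> 'a set \<Rightarrow> 'a \<Rightarrow> 'a set" where
  "del E W v = W - insert v (Collect (E v))"

locale comb =
  fixes U :: "'a set" and E :: "'a \<Rightarrow> 'a \<Rightarrow> bool" and \<beta> :: "'a set \<Rightarrow> real"
  assumes finU: "finite U"
    and symE: "\<And>x y. E x y \<Longrightarrow> E y x"
    and irrE: "\<And>x. \<not> E x x"
    and tfree: "\<And>x y z. x \<in> U \<Longrightarrow> y \<in> U \<Longrightarrow> z \<in> U \<Longrightarrow> E x y \<Longrightarrow> E y z \<Longrightarrow> \<not> E x z"
    and brA: "\<And>W v. W \<subseteq> U \<Longrightarrow> v \<in> W \<Longrightarrow> \<beta> W \<le> \<beta> (W - {v}) + \<beta> (del E W v)"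
    and brB: "\<And>W v. W \<subseteq> U \<Longrightarrow> v \<in> W \<Longrightarrow> (\<forall>u\<in>W. \<not> E v u) \<Longrightarrow> \<beta> W \<le> 0"
    and brC: "\<beta> {} \<le> 1"
begin

lemma S_gen: "distinct us \<Longrightarrow> set us \<subseteq> W \<Longrightarrow> W \<subseteq> U \<Longrightarrow>
  \<beta> W \<le> (\<Sum>i<length us. \<beta> (del E (W - set (take i us)) (us!i))) + \<beta> (W - set us)"
proof (induction us arbitrary: W)
  case Nil
  then show ?case by simp
next
  case (Cons u us)
  have IH: "\<beta> (W - {u}) \<le> (\<Sum>i<length us. \<beta> (del E (W - {u} - set (take i us)) (us!i))) + \<beta> (W - {u} - set us)"
    using Cons by (intro Cons.IH) auto
  have A: "\<beta> W \<le> \<beta> (W - {u}) + \<beta> (del E W u)" using Cons by (intro brA) auto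
  have "(\<Sum>i<length (u#us). \<beta> (del E (W - set (take i (u#us))) ((u#us)!i)))
      = \<beta> (del E W u) + (\<Sum>i<length us. \<beta> (del E (W - {u} - set (take i us)) (us!i)))"
  proof -
    have eq: "\<And>i. W - set (take (Suc i) (u#us)) = W - {u} - set (take i us)" by auto
    show ?thesis by (simp only: sum.lessThan_Suc_shift eq length_Cons nth_Cons_Suc nth_Cons_0 take_0 list.set(1) Diff_empty)
  qed
  moreover have "W - set (u#us) = W - {u} - set us" by auto
  ultimately show ?case using IH A by simp
qed

lemma S: assumes "v \<in> W" "W \<subseteq> U" "distinct us" "set us = nbr E W v"
  shows "\<beta> W \<le> (\<Sum>i<length us. \<beta> (del E (W - set (take i us)) (us!i)))"
proof -
  have "\<beta> W \<le> (\<Sum>i<length us. \<beta> (del E (W - set (take i us)) (us!i))) + \<beta> (W - set us)"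
    using assms by (intro S_gen) (auto simp: nbr_def)
  moreover have "\<beta> (W - set us) \<le> 0"
    using assms by (intro brB[of _ v]) (auto simp: nbr_def irrE)
  ultimately show ?thesis by simp
qed

lemma card_term: assumes "v \<in> W" "W \<subseteq> U" "distinct us" "set us = nbr E W v" "i < length us"
  shows "card (del E (W - set (take i us)) (us!i)) + (i + 1 + deg E W (us!i)) \<le> card W"
proof -
  define T where "T = set (take i us)"
  define u where "u = us!i"
  define X where "X = T \<union> {u} \<union> nbr E W u"
  have finW: "finite W" using assms finU finite_subset by blast
  have uin: "u \<in> nbr E W v" using assms unfolding u_def by (metis nth_mem)
  have TN: "T \<subseteq> nbr E W v" using assms unfolding T_def by (metis set_take_subset)
  have XW: "X \<subseteq> W" using TN uin unfolding X_def nbr_def by auto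
  have eq: "del E (W - T) u = W - X" unfolding del_def X_def nbr_def by auto
  have uT: "u \<notin> T"
  proof
    assume "u \<in> T"
    then obtain j where j: "j < length (take i us)" "take i us ! j = us ! i" unfolding T_def u_def
      by (auto simp: in_set_conv_nth)
    hence "us ! j = us ! i" "j < i" by auto
    thus False using assms nth_eq_iff_index_eq[of us j i] by auto
  qed
  have uN: "u \<notin> nbr E W u" by (simp add: nbr_def irrE)
  have TNu: "T \<inter> nbr E W u = {}"
  proof (rule ccontr)
    assume "T \<inter> nbr E W u \<noteq> {}"
    then obtain t where t: "t \<in> T" "t \<in> nbr E W u" by blast
    have "E v t" "E v u" "E u t" "t \<in> U" "u \<in> U" "v \<in> U" using t TN uin assms by (auto simp: nbr_def)
    thus False using tfree by blast
  qed
  have cT: "card T = i" unfolding T_def using assms by (simp add: distinct_card)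
  have finN: "finite (nbr E W u)" using finW by (simp add: nbr_def)
  have "card X = card T + 1 + card (nbr E W u)"
  proof -
    have "card X = card (insert u T) + card (nbr E W u)" unfolding X_def
      using TNu uN finN by (subst card_Un_disjoint[symmetric]) (auto simp: T_def)
    thus ?thesis using uT by (simp add: T_def)
  qed
  hence "card (W - X) + card X = card W" using XW finW
    by (metis card_Diff_subset card_mono finite_subset le_add_diff_inverse2)
  thus ?thesis using eq cT \<open>card X = _\<close> unfolding deg_def T_def u_def by simp
qed

definition IH :: "nat \<Rightarrow> bool" where
  "IH n \<longleftrightarrow> (\<forall>W'\<subseteq>U. card W' < n \<longrightarrow> \<beta> W' \<le> Gamma4 ^ card W')"

lemma Sb: assumes "IH (card W)" "v \<in> W" "W \<subseteq> U" "distinct us" "set us = nbr E W v"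
  shows "\<beta> W \<le> (\<Sum>i<length us. Gamma4^card W * yy^(i + 1 + deg E W (us!i)))"
proof -
  have "\<beta> W \<le> (\<Sum>i<length us. \<beta> (del E (W - set (take i us)) (us!i)))" using assms by (intro S)
  also have "\<dots> \<le> (\<Sum>i<length us. Gamma4^card W * yy^(i + 1 + deg E W (us!i)))"
  proof (intro sum_mono)
    fix i assume "i \<in> {..<length us}"
    hence c: "card (del E (W - set (take i us)) (us!i)) + (i + 1 + deg E W (us!i)) \<le> card W"
      using assms by (intro card_term) auto
    have "\<beta> (del E (W - set (take i us)) (us!i)) \<le> Gamma4 ^ card (del E (W - set (take i us)) (us!i))"
    proof -
      have "del E (W - set (take i us)) (us!i) \<subseteq> U" using assms(3) unfolding del_def by auto
      moreover have "card (del E (W - set (take i us)) (us!i)) < card W" using c by linarith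
      ultimately show ?thesis using assms(1) unfolding IH_def by blast
    qed
    also have "\<dots> \<le> Gamma4^card W * yy^(i + 1 + deg E W (us!i))" using c by (rule pow_bound)
    finally show "\<beta> (del E (W - set (take i us)) (us!i)) \<le> Gamma4^card W * yy^(i + 1 + deg E W (us!i))" .
  qed
  finally show ?thesis .
qed

lemma min_deg_exists: assumes "W \<subseteq> U" "W \<noteq> {}"
  obtains v where "v \<in> W" "\<And>w. w \<in> W \<Longrightarrow> deg E W v \<le> deg E W w"
proof -
  have fin: "finite W" using assms finU finite_subset by blast
  define m where "m = Min (deg E W ` W)"
  have "m \<in> deg E W ` W" unfolding m_def using fin assms by (intro Min_in) auto
  then obtain v where "v \<in> W" "deg E W v = m" by auto
  moreover have "\<And>w. w \<in> W \<Longrightarrow> m \<le> deg E W w" unfolding m_def using fin by auto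
  ultimately show ?thesis using that by auto
qed

lemma nbr_list: assumes "W \<subseteq> U" obtains us where "distinct us" "set us = nbr E W v"
proof -
  have "finite W" using assms finU finite_subset by blast
  hence "finite (nbr E W v)" by (auto simp: nbr_def)
  thus ?thesis using that finite_distinct_list by blast
qed

lemma Gbound: assumes "IH (card W)" "v \<in> W" "W \<subseteq> U" "\<And>w. w \<in> W \<Longrightarrow> deg E W v \<le> deg E W w"
  shows "\<beta> W \<le> Gamma4^card W * gsum (deg E W v)"
proof -
  obtain us where us: "distinct us" "set us = nbr E W v" using nbr_list assms(3) by blast
  have len: "length us = deg E W v" using us unfolding deg_def by (metis distinct_card)
  have "\<beta> W \<le> (\<Sum>i<length us. Gamma4^card W * yy^(i + 1 + deg E W (us!i)))" using assms us by (intro Sb)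
  also have "\<dots> \<le> (\<Sum>i<length us. Gamma4^card W * yy^(i + 1 + deg E W v))"
  proof (intro sum_mono mult_left_mono)
    fix i assume "i \<in> {..<length us}"
    hence "us!i \<in> W" using us by (auto simp: nbr_def dest: nth_mem)
    hence "deg E W v \<le> deg E W (us!i)" using assms by auto
    thus "yy^(i + 1 + deg E W (us!i)) \<le> yy^(i + 1 + deg E W v)"
      using yy_pos yy_le1 by (intro power_decreasing) auto
  qed (use x_pos in auto)
  also have "\<dots> = Gamma4^card W * gsum (deg E W v)" unfolding gsum_def len by (simp add: sum_distrib_left)
  finally show ?thesis .
qed

lemma Lbound: assumes "IH (card W)" "W \<subseteq> U" "u \<in> W" "deg E W u \<le> 2"
  shows "\<beta> W \<le> Gamma4^card W * (yy^3 + yy^4)"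
proof -
  obtain v where v: "v \<in> W" "\<And>w. w \<in> W \<Longrightarrow> deg E W v \<le> deg E W w"
    using min_deg_exists[of W] assms by blast
  have d: "deg E W v \<le> 2" using v assms by force
  have "gsum (deg E W v) \<le> yy^3 + yy^4"
  proof -
    consider "deg E W v = 0" | "deg E W v = 1" | "deg E W v = 2" using d by linarith
    thus ?thesis
    proof cases
      case 1 thus ?thesis using yy_pos by (simp add: gsum_def)
    next
      case 2 thus ?thesis using num_c2 by (simp add: gsum_def power2_eq_square)
    next
      case 3 thus ?thesis by (simp add: gsum_def eval_nat_numeral)
    qed
  qed
  hence "Gamma4^card W * gsum (deg E W v) \<le> Gamma4^card W * (yy^3 + yy^4)"
    using x_pos by (intro mult_left_mono) auto
  thus ?thesis using Gbound[OF assms(1) v(1) assms(2) v(2)] by linarith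
qed

lemma IH_mono: "IH n \<Longrightarrow> m \<le> n \<Longrightarrow> IH m" unfolding IH_def by auto

lemma main_step: assumes "IH (card W)" "W \<subseteq> U" shows "\<beta> W \<le> Gamma4 ^ card W"
proof (cases "W = {}")
  case True thus ?thesis using brC by simp
next
  case False
  obtain v where v: "v \<in> W" "\<And>w. w \<in> W \<Longrightarrow> deg E W v \<le> deg E W w"
    using min_deg_exists[OF assms(2) False] by blast
  have xn: "0 \<le> Gamma4^card W" using x_pos by simp
  consider "deg E W v \<le> 2" | "4 \<le> deg E W v" | "deg E W v = 3" by linarith
  thus ?thesis
  proof cases
    case 1
    have "\<beta> W \<le> Gamma4^card W * (yy^3 + yy^4)" using Lbound assms v 1 by blast
    also have "\<dots> \<le> Gamma4^card W * 1" using num_c1 xn by (intro mult_left_mono) auto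
    finally show ?thesis by simp
  next
    case 2
    have "\<beta> W \<le> Gamma4^card W * gsum (deg E W v)" using Gbound assms v by blast
    also have "\<dots> \<le> Gamma4^card W * 1" using gsum_le[OF 2] xn by (intro mult_left_mono) auto
    finally show ?thesis by simp
  next
    case 3
    define N where "N = nbr E W v"
    have cN: "card N = 3" using 3 unfolding N_def deg_def .
    have finN: "finite N" using cN by (metis card.infinite zero_neq_numeral)
    have NW: "N \<subseteq> W" unfolding N_def nbr_def by auto
    have degN: "\<And>u. u \<in> N \<Longrightarrow> 3 \<le> deg E W u" using v 3 NW by force
    show ?thesis
    proof (cases "\<exists>u\<in>N. 4 \<le> deg E W u")
      case True
      then obtain u where u: "u \<in> N" "4 \<le> deg E W u" by blast
      obtain rest where rest: "distinct rest" "set rest = N - {u}"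
        using finN finite_distinct_list[of "N - {u}"] by auto
      have lr: "length rest = 2" using rest cN u finN by (metis card_Diff_singleton distinct_card diff_Suc_1 numeral_3_eq_3 numeral_2_eq_2)
      define us where "us = u # rest"
      have us: "distinct us" "set us = nbr E W v" using rest u unfolding us_def N_def by auto
      have "\<beta> W \<le> (\<Sum>i<length us. Gamma4^card W * yy^(i + 1 + deg E W (us!i)))"
        using Sb[OF assms(1) v(1) assms(2) us] .
      also have "\<dots> \<le> (\<Sum>i<3. Gamma4^card W * yy^(i + 1 + (if i = 0 then 4 else 3)))"
      proof -
        have l: "length us = 3" using lr by (simp add: us_def)
        have "yy^(i + 1 + deg E W (us!i)) \<le> yy^(i + 1 + (if i = 0 then 4 else 3))" if "i < 3" for i
        proof -
          have "us!i \<in> N" using that l us unfolding N_def by (metis nth_mem)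
          hence "(if i = 0 then 4 else 3) \<le> deg E W (us!i)" using degN u by (auto simp: us_def)
          thus ?thesis using yy_pos yy_le1 by (intro power_decreasing) auto
        qed
        thus ?thesis unfolding l using xn by (intro sum_mono mult_left_mono) auto
      qed
      also have "\<dots> = Gamma4^card W * (2 * yy^5 + yy^6)"
        by (simp add: eval_nat_numeral algebra_simps)
      also have "\<dots> \<le> Gamma4^card W * 1" using num_c3 xn by (intro mult_left_mono) auto
      finally show ?thesis by simp
    next
      case False
      hence deg3: "\<And>u. u \<in> N \<Longrightarrow> deg E W u = 3" using degN by force
      obtain us where us: "distinct us" "set us = N" using finN finite_distinct_list by blast
      have l: "length us = 3" using us cN by (metis distinct_card)
      define u0 u1 u2 where "u0 = us!0" "u1 = us!1" "u2 = us!2"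
      have us_eq: "us = [u0, u1, u2]" unfolding u0_u1_u2_def
        by (rule nth_equalityI) (auto simp: l numeral_3_eq_3 numeral_2_eq_2 less_Suc_eq)
      have UW: "W \<subseteq> U" by fact
      have in_N: "u0 \<in> N" "u1 \<in> N" "u2 \<in> N" using us us_eq by auto
      have dist: "u0 \<noteq> u1" "u0 \<noteq> u2" "u1 \<noteq> u2" using us us_eq by auto
      have Ev: "E v u0" "E v u1" "E v u2" "u0 \<in> W" "u1 \<in> W" "u2 \<in> W" using in_N unfolding N_def nbr_def by auto
      have noE: "\<not> E a b" if "a \<in> N" "b \<in> N" for a b
        using that tfree[of v a b] v(1) UW unfolding N_def nbr_def by auto
      define W0 where "W0 = del E W u0"
      define W1 where "W1 = del E (W - {u0}) u1"
      define W2 where "W2 = del E (W - {u0, u1}) u2"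
      have S3: "\<beta> W \<le> \<beta> W0 + \<beta> W1 + \<beta> W2"
      proof -
        have "\<beta> W \<le> (\<Sum>i<length us. \<beta> (del E (W - set (take i us)) (us!i)))"
          using S[OF v(1) assms(2) us(1)] us unfolding N_def by simp
        also have "\<dots> = \<beta> W0 + \<beta> W1 + \<beta> W2"
        proof -
          have e: "{..<length us} = {0, 1, 2}" using l by auto
          have "W - {u0, u1} = W - set (take 2 us)" using us_eq by (simp add: numeral_2_eq_2)
          moreover have "W - {u0} = W - set (take 1 us)" using us_eq by simp
          ultimately show ?thesis unfolding e W0_def W1_def W2_def using us_eq by simp
        qed
        finally show ?thesis .
      qed
      have c0: "card W0 + 4 \<le> card W"
        using card_term[OF v(1) assms(2) us(1), of 0] us deg3 in_N l us_eq unfolding N_def W0_def by simp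
      have c1: "card W1 + 5 \<le> card W"
        using card_term[OF v(1) assms(2) us(1), of 1] us deg3 in_N l us_eq unfolding N_def W1_def by simp
      have c2: "card W2 + 6 \<le> card W"
      proof -
        have "W - {u0, u1} = W - set (take 2 us)" using us_eq by (simp add: numeral_2_eq_2)
        thus ?thesis using card_term[OF v(1) assms(2) us(1), of 2] us deg3 in_N l us_eq unfolding N_def W2_def
          by simp
      qed
      have sub: "W0 \<subseteq> U" "W1 \<subseteq> U" "W2 \<subseteq> U" using UW unfolding W0_def W1_def W2_def del_def by auto
      have finW: "finite W" using UW finU finite_subset by blast
      have dlow: "deg E X u \<le> 2" if "u \<in> N" "X \<subseteq> W" "v \<notin> X" for X u
      proof -
        have "nbr E X u \<subseteq> nbr E W u - {v}" using that unfolding nbr_def by auto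
        moreover have "v \<in> nbr E W u" using that v(1) symE unfolding N_def nbr_def by auto
        moreover have "finite (nbr E W u)" using finW by (simp add: nbr_def)
        ultimately have "card (nbr E X u) \<le> card (nbr E W u) - 1"
          by (metis card_Diff_singleton card_mono finite_Diff)
        thus ?thesis using deg3[OF that(1)] unfolding deg_def by simp
      qed
      have b0: "\<beta> W0 \<le> Gamma4^card W * yy^4 * (yy^3 + yy^4)"
      proof -
        have "u1 \<in> W0" using Ev dist noE[of u0 u1] in_N unfolding W0_def del_def by auto
        moreover have "deg E W0 u1 \<le> 2" using dlow[of u1 W0] in_N Ev symE unfolding W0_def del_def by auto
        ultimately have "\<beta> W0 \<le> Gamma4^card W0 * (yy^3 + yy^4)"
          using Lbound[of W0 u1] IH_mono[OF assms(1), of "card W0"] c0 sub by auto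
        also have "\<dots> \<le> Gamma4^card W * yy^4 * (yy^3 + yy^4)"
          using pow_bound[of "card W0" 4 "card W"] c0 yy_pos by (intro mult_right_mono) auto
        finally show ?thesis .
      qed
      have b1: "\<beta> W1 \<le> Gamma4^card W * yy^5 * (yy^3 + yy^4)"
      proof -
        have "u2 \<in> W1" using Ev dist noE[of u1 u2] in_N unfolding W1_def del_def by auto
        moreover have "deg E W1 u2 \<le> 2" using dlow[of u2 W1] in_N Ev symE unfolding W1_def del_def by auto
        ultimately have "\<beta> W1 \<le> Gamma4^card W1 * (yy^3 + yy^4)"
          using Lbound[of W1 u2] IH_mono[OF assms(1), of "card W1"] c1 sub by auto
        also have "\<dots> \<le> Gamma4^card W * yy^5 * (yy^3 + yy^4)"
          using pow_bound[of "card W1" 5 "card W"] c1 yy_pos by (intro mult_right_mono) auto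
        finally show ?thesis .
      qed
      have b2: "\<beta> W2 \<le> Gamma4^card W * yy^6"
      proof -
        have "\<beta> W2 \<le> Gamma4^card W2" using assms(1) c2 sub unfolding IH_def by auto
        also have "\<dots> \<le> Gamma4^card W * yy^6" using pow_bound c2 by blast
        finally show ?thesis .
      qed
      have "\<beta> W \<le> Gamma4^card W * ((yy^3 + yy^4) * yy^4 + (yy^3 + yy^4) * yy^5 + yy^6)"
        using S3 b0 b1 b2 by (simp add: algebra_simps)
      also have "\<dots> \<le> Gamma4^card W * 1" using num_c4 xn by (intro mult_left_mono) auto
      finally show ?thesis by simp
    qed
  qed
qed

theorem comb_main: "W \<subseteq> U \<Longrightarrow> \<beta> W \<le> Gamma4 ^ card W"
proof (induction "card W" arbitrary: W rule: less_induct)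
  case less
  have "IH (card W)" unfolding IH_def using less by auto
  thus ?case using main_step less by blast
qed

end

abbreviation sc :: "'k::field \<Rightarrow> ('b \<Rightarrow> 'k) \<Rightarrow> ('b \<Rightarrow> 'k)" where
  "sc \<equiv> (\<lambda>c f x. c * f x)"

interpretation VS: vector_space "sc :: 'k::field \<Rightarrow> ('b \<Rightarrow> 'k) \<Rightarrow> ('b \<Rightarrow> 'k)"
  by unfold_locales (auto simp: algebra_simps fun_eq_iff)

lemma hom_intro: "(\<And>f g. L (f + g) = L f + L g) \<Longrightarrow> (\<And>c f. L (sc c f) = sc c (L f)) \<Longrightarrow>
   module_hom (sc :: 'k::field \<Rightarrow> ('b \<Rightarrow> 'k) \<Rightarrow> ('b \<Rightarrow> 'k)) (sc :: 'k \<Rightarrow> ('c \<Rightarrow> 'k) \<Rightarrow> ('c \<Rightarrow> 'k)) L"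
  by (auto simp: module_hom_def module_hom_axioms_def VS.module_axioms)

lemma dim_mono_fin:
  fixes S T :: "('b \<Rightarrow> 'k::field) set"
  assumes "finite F" "T \<subseteq> VS.span F" "S \<subseteq> T"
  shows "VS.dim S \<le> VS.dim T"
proof -
  obtain B where B: "B \<subseteq> S" "VS.independent B" "S \<subseteq> VS.span B" "card B = VS.dim S"
    using VS.basis_exists by blast
  obtain B' where B': "B \<subseteq> B'" "B' \<subseteq> T" "VS.independent B'" "T \<subseteq> VS.span B'"
    using VS.maximal_independent_subset_extend[of B T] B assms(3) by blast
  have fin: "finite B'" using VS.independent_span_bound[OF assms(1) B'(3)] B'(2) assms(2) by blast
  have "VS.dim T = card B'" using VS.basis_card_eq_dim[OF B'(2) B'(4) B'(3)] by simp
  thus ?thesis using B B' fin card_mono by metis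
qed

lemma rank_nullity_le:
  fixes S :: "('b \<Rightarrow> 'k::field) set" and L :: "('b \<Rightarrow> 'k) \<Rightarrow> ('c \<Rightarrow> 'k)"
  assumes "finite F" "S \<subseteq> VS.span F" "module_hom sc sc L"
  shows "VS.dim {x\<in>S. L x = 0} + VS.dim (L ` S) \<le> VS.dim S"
proof -
  obtain K where K: "K \<subseteq> {x\<in>S. L x = 0}" "VS.independent K" "{x\<in>S. L x = 0} \<subseteq> VS.span K"
     "card K = VS.dim {x\<in>S. L x = 0}"
    using VS.basis_exists by blast
  obtain B where B: "K \<subseteq> B" "B \<subseteq> S" "VS.independent B" "S \<subseteq> VS.span B"
    using VS.maximal_independent_subset_extend[of K S] K by blast
  have fin: "finite B" using VS.independent_span_bound[OF assms(1) B(3)] B(2) assms(2) by blast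
  have dS: "VS.dim S = card B" using VS.basis_card_eq_dim[OF B(2) B(4) B(3)] by simp
  have "L ` S \<subseteq> L ` VS.span B" using B(4) by auto
  also have "\<dots> = VS.span (L ` B)" using module_hom.span_image[OF assms(3)] by metis
  also have "\<dots> \<subseteq> VS.span (L ` (B - K))"
  proof -
    have "L ` B \<subseteq> insert 0 (L ` (B - K))" using K by auto
    hence "VS.span (L ` B) \<subseteq> VS.span (insert 0 (L ` (B - K)))" by (rule VS.span_mono)
    thus ?thesis by simp
  qed
  finally have "VS.dim (L ` S) \<le> card (L ` (B - K))"
    using fin by (intro VS.dim_le_card) auto
  also have "\<dots> \<le> card (B - K)" using fin by (intro card_image_le) auto
  also have "\<dots> = card B - card K" using fin B(1) by (simp add: card_Diff_subset finite_subset)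
  finally show ?thesis using K(4) dS fin B(1) card_mono by (metis add_le_imp_le_diff add.commute le_diff_conv2)
qed

lemma dim_image_le_fin:
  fixes S :: "('b \<Rightarrow> 'k::field) set" and L :: "('b \<Rightarrow> 'k) \<Rightarrow> ('c \<Rightarrow> 'k)"
  assumes "finite F" "S \<subseteq> VS.span F" "module_hom sc sc L"
  shows "VS.dim (L ` S) \<le> VS.dim S"
  using rank_nullity_le[OF assms] by simp

lemma dim_inj_image_ge:
  fixes S :: "('b \<Rightarrow> 'k::field) set" and L :: "('b \<Rightarrow> 'k) \<Rightarrow> ('c \<Rightarrow> 'k)"
  assumes "finite F" "L ` S \<subseteq> VS.span F" "module_hom sc sc L" "inj_on L (VS.span S)"
  shows "VS.dim S \<le> VS.dim (L ` S)"
proof -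
  obtain B where B: "B \<subseteq> S" "VS.independent B" "S \<subseteq> VS.span B" "card B = VS.dim S"
    using VS.basis_exists by blast
  have injB: "inj_on L (VS.span B)"
    using assms(4) VS.span_mono[OF B(1)] inj_on_subset by blast
  have indep: "VS.independent (L ` B)"
    using module_hom.independent_injective_image[OF assms(3) B(2) injB] .
  have sub: "L ` B \<subseteq> L ` S" using B by auto
  have finLB: "finite (L ` B)" using VS.independent_span_bound[OF assms(1) indep] sub assms(2) by blast
  have injB': "inj_on L B" using injB VS.span_superset inj_on_subset by blast
  have "card B = card (L ` B)" using card_image[OF injB'] by simp
  also have "\<dots> = VS.dim (L ` B)" using VS.dim_eq_card_independent[OF indep] by simp
  also have "\<dots> \<le> VS.dim (L ` S)" using dim_mono_fin[OF assms(1) assms(2) sub] .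
  finally show ?thesis using B(4) by simp
qed

lemma dim_zero_set: "VS.dim ({0} :: ('b \<Rightarrow> 'k::field) set) = 0"
proof -
  have "VS.dim ({} :: ('b \<Rightarrow> 'k) set) = 0" using VS.dim_eq_card_independent[OF VS.independent_empty] by simp
  moreover have "VS.span ({} :: ('b \<Rightarrow> 'k) set) = VS.span {0}" by simp
  ultimately show ?thesis using VS.span_eq_dim by metis
qed

lemma dim_le_zero_set: assumes "S \<subseteq> {0}" shows "VS.dim (S :: ('b \<Rightarrow> 'k::field) set) = 0"
proof -
  have "VS.dim S \<le> VS.dim ({0} :: ('b \<Rightarrow> 'k) set)" using dim_mono_fin[of "{}" "{0}" S] assms by simp
  thus ?thesis using dim_zero_set[where 'b='b and 'k='k] by simp
qed

lemma sum_fun_apply: "(\<Sum>i\<in>A. g i) x = (\<Sum>i\<in>A. g i x)"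
  by (induction A rule: infinite_finite_induct) auto

definition AU :: "'a set \<Rightarrow> ('a set \<Rightarrow> 'k::field) set" where
  "AU U = {f. \<forall>\<sigma>. f \<sigma> \<noteq> 0 \<longrightarrow> \<sigma> \<subseteq> U}"

definition ind :: "'a set \<Rightarrow> ('a set \<Rightarrow> 'k::field)" where
  "ind \<sigma> = (\<lambda>\<tau>. if \<tau> = \<sigma> then 1 else 0)"

definition Fk :: "'a set \<Rightarrow> ('a \<Rightarrow> 'a \<Rightarrow> bool) \<Rightarrow> nat \<Rightarrow> 'a set set" where
  "Fk W E k = {\<sigma> \<in> ind_faces W E. card \<sigma> = k}"

lemma ind_inj: "inj (ind :: 'a set \<Rightarrow> ('a set \<Rightarrow> 'k::field))"
  by (rule injI) (metis ind_def one_neq_zero)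

lemma repr_sum: assumes "finite A" "\<And>\<sigma>. f \<sigma> \<noteq> 0 \<Longrightarrow> \<sigma> \<in> A"
  shows "f = (\<Sum>\<sigma>\<in>A. sc (f \<sigma>) (ind \<sigma> :: 'a set \<Rightarrow> 'k::field))"
proof
  fix \<tau>
  have "(\<Sum>\<sigma>\<in>A. sc (f \<sigma>) (ind \<sigma> :: 'a set \<Rightarrow> 'k)) \<tau> = (\<Sum>\<sigma>\<in>A. f \<sigma> * (if \<tau> = \<sigma> then 1 else 0))"
    by (simp add: sum_fun_apply ind_def)
  also have "\<dots> = (if \<tau> \<in> A then f \<tau> else 0)"
  proof -
    have "(\<Sum>\<sigma>\<in>A. f \<sigma> * (if \<tau> = \<sigma> then 1 else 0)) = (\<Sum>\<sigma>\<in>A. if \<tau> = \<sigma> then f \<tau> else 0)"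
      by (rule sum.cong) auto
    thus ?thesis using assms(1) by (simp add: sum.delta)
  qed
  also have "\<dots> = f \<tau>" using assms(2) by auto
  finally show "f \<tau> = (\<Sum>\<sigma>\<in>A. sc (f \<sigma>) (ind \<sigma> :: 'a set \<Rightarrow> 'k)) \<tau>" by simp
qed

lemma in_span_ind: assumes "finite A" "\<And>\<sigma>. f \<sigma> \<noteq> 0 \<Longrightarrow> \<sigma> \<in> A"
  shows "f \<in> VS.span (ind ` A :: ('a set \<Rightarrow> 'k::field) set)"
proof -
  have "(\<Sum>\<sigma>\<in>A. sc (f \<sigma>) (ind \<sigma> :: 'a set \<Rightarrow> 'k)) \<in> VS.span (ind ` A)"
    by (intro VS.span_sum VS.span_scale VS.span_base) auto
  thus ?thesis using repr_sum[of A f, OF assms] by simp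
qed

lemma ind_independent: "VS.independent (ind ` A :: ('a set \<Rightarrow> 'k::field) set)"
  unfolding VS.independent_explicit_module
proof (intro allI impI)
  fix t u v
  assume h: "finite t" "t \<subseteq> ind ` A" "(\<Sum>v\<in>t. sc (u v) v) = (0 :: 'a set \<Rightarrow> 'k)" "v \<in> t"
  then obtain \<sigma> where \<sigma>: "v = ind \<sigma>" by blast
  have "0 = (\<Sum>w\<in>t. sc (u w) w) \<sigma>" using h by simp
  also have "\<dots> = (\<Sum>w\<in>t. u w * w \<sigma>)" by (simp add: sum_fun_apply)
  also have "\<dots> = u v * v \<sigma>"
  proof (rule sum.remove[OF h(1) h(4), THEN trans])
    have "(\<Sum>w\<in>t - {v}. u w * w \<sigma>) = 0"
    proof (rule sum.neutral, rule ballI)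
      fix w assume "w \<in> t - {v}"
      then obtain \<rho> where "w = ind \<rho>" "\<rho> \<noteq> \<sigma>" using h(2) \<sigma> by auto
      thus "u w * w \<sigma> = 0" by (simp add: ind_def)
    qed
    thus "u v * v \<sigma> + (\<Sum>w\<in>t - {v}. u w * w \<sigma>) = u v * v \<sigma>" by simp
  qed
  also have "\<dots> = u v" using \<sigma> by (simp add: ind_def)
  finally show "u v = 0" by simp
qed

lemma AU_span: assumes "finite U" "f \<in> AU U"
  shows "f \<in> VS.span (ind ` Pow U :: ('a set \<Rightarrow> 'k::field) set)"
  using assms by (intro in_span_ind) (auto simp: AU_def)

lemma dim_span_ind: "finite A \<Longrightarrow> S \<subseteq> VS.span (ind ` A) \<Longrightarrow> ind ` A \<subseteq> S \<Longrightarrow>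
  VS.dim (S :: ('a set \<Rightarrow> 'k::field) set) = card A"
  using VS.basis_card_eq_dim[of "ind ` A" S] ind_independent[of A] card_image[OF inj_on_subset[OF ind_inj]]
  by (metis subset_UNIV)

locale gctx =
  fixes U :: "'a::linorder set" and E :: "'a \<Rightarrow> 'a \<Rightarrow> bool"
  assumes sg: "simple_graph U E"
begin

lemma finU: "finite U" using sg by (simp add: simple_graph_def)
lemma symE: "E x y \<Longrightarrow> E y x" using sg by (simp add: simple_graph_def)
lemma irrE: "\<not> E x x" using sg by (simp add: simple_graph_def)

abbreviation ch :: "nat \<Rightarrow> 'a set \<Rightarrow> ('a set \<Rightarrow> 'k::field) set" where
  "ch k W \<equiv> ind_chains W E k"

abbreviation bd :: "('a set \<Rightarrow> 'k::field) \<Rightarrow> ('a set \<Rightarrow> 'k)" where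
  "bd \<equiv> ind_boundary U"

lemma faces_sub: "\<sigma> \<in> ind_faces W E \<Longrightarrow> \<sigma> \<subseteq> W" by (simp add: ind_faces_def)

lemma ch_AU: "W \<subseteq> U \<Longrightarrow> ch k W \<subseteq> AU U"
  by (fastforce simp: ind_chains_def AU_def ind_faces_def)

lemma ch_span: "W \<subseteq> U \<Longrightarrow> ch k W \<subseteq> VS.span (ind ` Pow U)"
  using ch_AU AU_span finU by blast

lemma ch_mono: "W \<subseteq> W' \<Longrightarrow> ch k W \<subseteq> ch k W'"
  by (fastforce simp: ind_chains_def ind_faces_def)

lemma ch_subspace: "VS.subspace (ch k W)"
  unfolding VS.subspace_def ind_chains_def by (auto; metis add.left_neutral add.right_neutral)

lemma bd_hom: "module_hom sc sc (bd :: ('a set \<Rightarrow> 'k::field) \<Rightarrow> _)"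
  by (rule hom_intro) (simp_all add: ind_boundary_def fun_eq_iff sum.distrib sum_distrib_left distrib_left mult.left_commute)

lemma bd_AU: assumes "f \<in> AU U" shows "bd f \<in> AU U"
  unfolding AU_def
proof (intro CollectI allI impI)
  fix \<tau> assume "bd f \<tau> \<noteq> 0"
  then obtain w where "w \<in> U - \<tau>" "f (insert w \<tau>) \<noteq> 0"
    unfolding ind_boundary_def by (metis (no_types, lifting) mult_zero_right sum.neutral)
  thus "\<tau> \<subseteq> U" using assms by (auto simp: AU_def)
qed

lemma bd_span: "f \<in> AU U \<Longrightarrow> bd f \<in> VS.span (ind ` Pow U)"
  using bd_AU AU_span finU by blast

lemma faces_finite: "W \<subseteq> U \<Longrightarrow> \<sigma> \<in> ind_faces W E \<Longrightarrow> finite \<sigma>"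
  using finU by (meson faces_sub finite_subset subset_trans)

lemma bd_ch: assumes "W \<subseteq> U" "f \<in> ch (Suc k) W" shows "bd f \<in> ch k W"
  unfolding ind_chains_def
proof (intro CollectI allI impI)
  fix \<tau> assume "bd f \<tau> \<noteq> 0"
  then obtain w where w: "w \<in> U - \<tau>" "f (insert w \<tau>) \<noteq> 0"
    unfolding ind_boundary_def by (metis (no_types, lifting) mult_zero_right sum.neutral)
  hence fa: "insert w \<tau> \<in> ind_faces W E" "card (insert w \<tau>) = Suc k" using assms(2) by (auto simp: ind_chains_def)
  have fin: "finite \<tau>" using faces_finite[OF assms(1) fa(1)] by simp
  show "\<tau> \<in> ind_faces W E \<and> card \<tau> = k"
    using fa w fin by (auto simp: ind_faces_def)
qed

lemma dim_ch: assumes "W \<subseteq> U" shows "VS.dim (ch k W :: ('a set \<Rightarrow> 'k::field) set) = card (Fk W E k)"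
proof -
  have fin: "finite (Fk W E k)"
  proof (rule finite_subset[of _ "Pow U"])
    show "Fk W E k \<subseteq> Pow U" using assms by (auto simp: Fk_def ind_faces_def)
  qed (simp add: finU)
  have a: "(ch k W :: ('a set \<Rightarrow> 'k) set) \<subseteq> VS.span (ind ` Fk W E k)"
  proof
    fix f :: "'a set \<Rightarrow> 'k" assume f: "f \<in> ch k W"
    show "f \<in> VS.span (ind ` Fk W E k)"
      by (rule in_span_ind[OF fin]) (use f in \<open>auto simp: ind_chains_def Fk_def\<close>)
  qed
  have b: "ind ` Fk W E k \<subseteq> (ch k W :: ('a set \<Rightarrow> 'k) set)"
    by (auto simp: ind_chains_def Fk_def ind_def split: if_splits)
  show ?thesis using dim_span_ind[OF fin a b] .
qed

lemma ch0: assumes "f \<in> ch 0 W" "W \<subseteq> U" shows "bd f = 0"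
proof (rule ext)
  fix \<tau>
  have "f (insert w \<tau>) = 0" for w
  proof (rule ccontr)
    assume "f (insert w \<tau>) \<noteq> 0"
    hence "insert w \<tau> \<in> ind_faces W E" "card (insert w \<tau>) = 0" using assms(1) by (auto simp: ind_chains_def)
    moreover have "finite (insert w \<tau>)" by (rule faces_finite[OF assms(2) calculation(1)])
    ultimately show False by simp
  qed
  thus "bd f \<tau> = 0 \<tau>" by (simp add: ind_boundary_def)
qed

lemma chN: assumes "W \<subseteq> U" "card U < k" shows "ch k W \<subseteq> {0}"
proof
  fix f assume f: "f \<in> ch k W"
  have "f \<sigma> = 0" for \<sigma>
  proof (rule ccontr)
    assume "f \<sigma> \<noteq> 0"
    hence "\<sigma> \<in> ind_faces W E" "card \<sigma> = k" using f by (auto simp: ind_chains_def)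
    hence "\<sigma> \<subseteq> U" "card \<sigma> = k" using assms(1) faces_sub by blast+
    hence "card \<sigma> \<le> card U" using card_mono[OF finU] by blast
    thus False using assms(2) \<open>card \<sigma> = k\<close> by linarith
  qed
  thus "f \<in> {0}" by auto
qed

end

lemma cnt_ins_less: "finite \<rho> \<Longrightarrow> v \<notin> \<rho> \<Longrightarrow> (v::'a::linorder) < w \<Longrightarrow>
  card {u\<in>insert v \<rho>. u < w} = Suc (card {u\<in>\<rho>. u < w})"
proof -
  assume h: "finite \<rho>" "v \<notin> \<rho>" "v < w"
  have "{u\<in>insert v \<rho>. u < w} = insert v {u\<in>\<rho>. u < w}" using h by auto
  thus ?thesis using h by simp
qed

lemma cnt_ins_ge: "\<not> (v::'a::linorder) < w \<Longrightarrow> {u\<in>insert v \<rho>. u < w} = {u\<in>\<rho>. u < w}"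
  by auto

context gctx begin

lemma bdbd: assumes f: "f \<in> AU U" shows "bd (bd f) = (0 :: 'a set \<Rightarrow> 'k::field)"
proof (rule ext)
  fix \<rho> :: "'a set"
  define A where "A = U - \<rho>"
  define s where "s = (\<lambda>(X::'a set) w. (-1::'k)^card{u\<in>X. u<w})"
  define g where "g = (\<lambda>(v,w). s \<rho> v * (s (insert v \<rho>) w * f (insert w (insert v \<rho>))))"
  have finA: "finite A" using finU by (simp add: A_def)
  have "bd (bd f) \<rho> = (\<Sum>v\<in>A. \<Sum>w\<in>A-{v}. g(v,w))"
  proof -
    have "U - insert v \<rho> = A - {v}" for v unfolding A_def by auto
    thus ?thesis unfolding ind_boundary_def g_def s_def A_def by (simp add: sum_distrib_left)
  qed
  also have "\<dots> = 0"
  proof (cases "\<rho> \<subseteq> U")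
    case False
    have "g (v,w) = 0" for v w
    proof -
      have "\<not> insert w (insert v \<rho>) \<subseteq> U" using False by auto
      hence "f (insert w (insert v \<rho>)) = 0" using f by (auto simp: AU_def)
      thus ?thesis by (simp add: g_def)
    qed
    thus ?thesis by simp
  next
    case True
    have fin\<rho>: "finite \<rho>" using True finU finite_subset by blast
    define P where "P = Sigma A (\<lambda>v. A - {v})"
    define P1 where "P1 = {p\<in>P. fst p < snd p}"
    define P2 where "P2 = {p\<in>P. snd p < fst p}"
    have finP: "finite P" using finA by (simp add: P_def)
    have "(\<Sum>v\<in>A. \<Sum>w\<in>A-{v}. g(v,w)) = (\<Sum>p\<in>P. g p)"
      unfolding P_def using finA by (subst sum.Sigma) auto
    also have "\<dots> = (\<Sum>p\<in>P1. g p) + (\<Sum>p\<in>P2. g p)"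
    proof -
      have "P = P1 \<union> P2" "P1 \<inter> P2 = {}" unfolding P_def P1_def P2_def by (auto simp: neq_iff)
      thus ?thesis using finP by (simp add: sum.union_disjoint)
    qed
    also have "(\<Sum>p\<in>P2. g p) = (\<Sum>p\<in>P1. g (prod.swap p))"
    proof -
      have "P2 = prod.swap ` P1" unfolding P1_def P2_def P_def by force
      thus ?thesis by (simp add: sum.reindex)
    qed
    also have "(\<Sum>p\<in>P1. g p) + (\<Sum>p\<in>P1. g (prod.swap p)) = (\<Sum>p\<in>P1. g p + g (prod.swap p))"
      by (simp add: sum.distrib)
    also have "\<dots> = 0"
    proof (rule sum.neutral, rule ballI)
      fix p assume p: "p \<in> P1"
      obtain v w where vw: "p = (v, w)" by fastforce
      have h: "v \<notin> \<rho>" "w \<notin> \<rho>" "v < w" using p vw unfolding P1_def P_def A_def by auto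
      have s1: "s (insert v \<rho>) w = - s \<rho> w" unfolding s_def using cnt_ins_less[OF fin\<rho> h(1) h(3)] by simp
      have s2: "s (insert w \<rho>) v = s \<rho> v" unfolding s_def using cnt_ins_ge[of w v \<rho>] h(3) by simp
      have ins: "insert v (insert w \<rho>) = insert w (insert v \<rho>)" by auto
      show "g p + g (prod.swap p) = 0" unfolding vw g_def using s1 s2 ins by (simp add: algebra_simps)
    qed
    finally show ?thesis .
  qed
  finally show "bd (bd f) \<rho> = 0 \<rho>" by simp
qed

end

lemma cnt2_less: "finite \<rho> \<Longrightarrow> w \<notin> \<rho> \<Longrightarrow> (v::'a::linorder) < w \<Longrightarrow>
  card {u\<in>insert w \<rho>. v < u} = Suc (card {u\<in>\<rho>. v < u})"
proof -
  assume h: "finite \<rho>" "w \<notin> \<rho>" "v < w"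
  have "{u\<in>insert w \<rho>. v < u} = insert w {u\<in>\<rho>. v < u}" using h by auto
  thus ?thesis using h by simp
qed

lemma cnt2_ge: "\<not> (v::'a::linorder) < w \<Longrightarrow> {u\<in>insert w \<rho>. v < u} = {u\<in>\<rho>. v < u}"
  by auto

definition eps :: "'a::linorder \<Rightarrow> 'a set \<Rightarrow> 'k::field" where
  "eps v \<rho> = (-1)^card {u\<in>\<rho>. v < u}"

definition Phi :: "'a::linorder \<Rightarrow> ('a set \<Rightarrow> 'k::field) \<Rightarrow> ('a set \<Rightarrow> 'k)" where
  "Phi v g = (\<lambda>\<sigma>. if v \<in> \<sigma> then eps v (\<sigma> - {v}) * g (\<sigma> - {v}) else 0)"

definition proj_in :: "'a \<Rightarrow> ('a set \<Rightarrow> 'k::field) \<Rightarrow> ('a set \<Rightarrow> 'k)" where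
  "proj_in v h = (\<lambda>\<sigma>. if v \<in> \<sigma> then h \<sigma> else 0)"

definition proj_out :: "'a \<Rightarrow> ('a set \<Rightarrow> 'k::field) \<Rightarrow> ('a set \<Rightarrow> 'k)" where
  "proj_out v h = (\<lambda>\<sigma>. if v \<notin> \<sigma> then h \<sigma> else 0)"

definition Av :: "'a \<Rightarrow> ('a set \<Rightarrow> 'k::field) set" where
  "Av v = {h. \<forall>\<sigma>. v \<in> \<sigma> \<longrightarrow> h \<sigma> = 0}"

lemma eps_nz: "eps v \<rho> \<noteq> 0" by (simp add: eps_def)

lemma Phi_hom: "module_hom sc sc (Phi v :: ('a::linorder set \<Rightarrow> 'k::field) \<Rightarrow> _)"
  by (rule hom_intro) (auto simp: Phi_def fun_eq_iff algebra_simps)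

lemma proj_in_hom: "module_hom sc sc (proj_in v :: ('a set \<Rightarrow> 'k::field) \<Rightarrow> _)"
  by (rule hom_intro) (auto simp: proj_in_def fun_eq_iff)

lemma proj_out_hom: "module_hom sc sc (proj_out v :: ('a set \<Rightarrow> 'k::field) \<Rightarrow> _)"
  by (rule hom_intro) (auto simp: proj_out_def fun_eq_iff)

lemma Av_subspace: "VS.subspace (Av v)"
  unfolding VS.subspace_def Av_def by auto

lemma Phi_inj: "inj_on (Phi v :: ('a::linorder set \<Rightarrow> 'k::field) \<Rightarrow> _) (Av v)"
proof (rule inj_onI)
  fix g h :: "'a set \<Rightarrow> 'k" assume gh: "g \<in> Av v" "h \<in> Av v" "Phi v g = Phi v h"
  show "g = h"
  proof
    fix \<rho>
    show "g \<rho> = h \<rho>"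
    proof (cases "v \<in> \<rho>")
      case True thus ?thesis using gh by (simp add: Av_def)
    next
      case False
      have "Phi v g (insert v \<rho>) = Phi v h (insert v \<rho>)" using gh by simp
      moreover have "insert v \<rho> - {v} = \<rho>" using False by auto
      ultimately show ?thesis by (simp add: Phi_def eps_nz)
    qed
  qed
qed

lemma AU_Phi: "v \<in> U \<Longrightarrow> g \<in> AU U \<Longrightarrow> Phi v g \<in> AU U"
  unfolding AU_def Phi_def by (auto split: if_splits)

lemma AU_proj_in: "h \<in> AU U \<Longrightarrow> proj_in v h \<in> AU U"
  unfolding AU_def proj_in_def by (auto split: if_splits)

lemma AU_proj_out: "h \<in> AU U \<Longrightarrow> proj_out v h \<in> AU U"
  unfolding AU_def proj_out_def by (auto split: if_splits)

context gctx begin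

lemma bd_Av: "g \<in> Av v \<Longrightarrow> bd g \<in> Av v"
  unfolding Av_def ind_boundary_def by auto

lemma ch_Av: "v \<notin> W \<Longrightarrow> ch k W \<subseteq> Av v"
  unfolding Av_def ind_chains_def ind_faces_def by auto

lemma Phi_bd: assumes "v \<in> U" "g \<in> AU U" "g \<in> Av v"
  shows "proj_in v (bd (Phi v g)) = Phi v (bd g)"
proof
  fix \<sigma>
  show "proj_in v (bd (Phi v g)) \<sigma> = Phi v (bd g) \<sigma>"
  proof (cases "v \<in> \<sigma>")
    case False thus ?thesis by (simp add: proj_in_def Phi_def)
  next
    case True
    define \<rho> where "\<rho> = \<sigma> - {v}"
    have \<sigma>eq: "\<sigma> = insert v \<rho>" "v \<notin> \<rho>" using True by (auto simp: \<rho>_def)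
    have Ueq: "U - \<rho> = insert v (U - \<sigma>)" "v \<notin> U - \<sigma>" using assms(1) True by (auto simp: \<rho>_def)
    have fin: "finite (U - \<sigma>)" using finU by simp
    have lhs: "proj_in v (bd (Phi v g)) \<sigma> = (\<Sum>w\<in>U - \<sigma>. (-1) ^ card {u \<in> \<sigma>. u < w} * (eps v (insert w \<rho>) * g (insert w \<rho>)))"
    proof -
      have e: "\<And>w. w \<in> U - \<sigma> \<Longrightarrow> Phi v g (insert w \<sigma>) = eps v (insert w \<rho>) * g (insert w \<rho>)"
      proof -
        fix w assume "w \<in> U - \<sigma>"
        hence "insert w \<sigma> - {v} = insert w \<rho>" using True by (auto simp: \<rho>_def)
        thus "Phi v g (insert w \<sigma>) = eps v (insert w \<rho>) * g (insert w \<rho>)" using True by (simp add: Phi_def)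
      qed
      have "proj_in v (bd (Phi v g)) \<sigma> = (\<Sum>w\<in>U - \<sigma>. (-1) ^ card {u \<in> \<sigma>. u < w} * Phi v g (insert w \<sigma>))"
        using True by (simp add: proj_in_def ind_boundary_def)
      also have "\<dots> = (\<Sum>w\<in>U - \<sigma>. (-1) ^ card {u \<in> \<sigma>. u < w} * (eps v (insert w \<rho>) * g (insert w \<rho>)))"
        by (rule sum.cong[OF refl]) (simp add: e)
      finally show ?thesis .
    qed
    have rhs: "Phi v (bd g) \<sigma> = eps v \<rho> * (\<Sum>w\<in>U - \<sigma>. (-1) ^ card {u \<in> \<rho>. u < w} * g (insert w \<rho>))"
    proof -
      have "g (insert v \<rho>) = 0" using assms(3) by (simp add: Av_def)
      hence "(\<Sum>w\<in>U - \<rho>. (-1) ^ card {u \<in> \<rho>. u < w} * g (insert w \<rho>)) = (\<Sum>w\<in>U - \<sigma>. (-1) ^ card {u \<in> \<rho>. u < w} * g (insert w \<rho>))"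
        using Ueq fin by simp
      thus ?thesis using True unfolding Phi_def ind_boundary_def \<rho>_def by simp
    qed
    have "(\<Sum>w\<in>U - \<sigma>. (-1) ^ card {u \<in> \<sigma>. u < w} * (eps v (insert w \<rho>) * g (insert w \<rho>)))
        = (\<Sum>w\<in>U - \<sigma>. eps v \<rho> * ((-1) ^ card {u \<in> \<rho>. u < w} * g (insert w \<rho>)))"
    proof (rule sum.cong[OF refl])
      fix w assume w: "w \<in> U - \<sigma>"
      show "(-1) ^ card {u \<in> \<sigma>. u < w} * (eps v (insert w \<rho>) * g (insert w \<rho>))
          = eps v \<rho> * ((-1) ^ card {u \<in> \<rho>. u < w} * g (insert w \<rho>))"
      proof (cases "g (insert w \<rho>) = 0")
        case True thus ?thesis by simp
      next
        case False
        hence "insert w \<rho> \<subseteq> U" using assms(2) by (auto simp: AU_def)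
        hence "finite (insert w \<rho>)" by (rule finite_subset[OF _ finU])
        hence fin\<rho>: "finite \<rho>" by simp
        have w\<rho>: "w \<notin> \<rho>" using w \<sigma>eq by auto
        show ?thesis
        proof (cases "v < w")
          case True
          have "card {u \<in> \<sigma>. u < w} = Suc (card {u \<in> \<rho>. u < w})"
            unfolding \<sigma>eq(1) by (rule cnt_ins_less[OF fin\<rho> \<sigma>eq(2) True])
          moreover have "card {u\<in>insert w \<rho>. v < u} = Suc (card {u\<in>\<rho>. v < u})"
            by (rule cnt2_less[OF fin\<rho> w\<rho> True])
          ultimately show ?thesis by (simp add: eps_def)
        next
          case False
          have "{u \<in> \<sigma>. u < w} = {u \<in> \<rho>. u < w}" unfolding \<sigma>eq(1) by (rule cnt_ins_ge[OF False])
          moreover have "{u\<in>insert w \<rho>. v < u} = {u\<in>\<rho>. v < u}" by (rule cnt2_ge[OF False])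
          ultimately show ?thesis by (simp add: eps_def)
        qed
      qed
    qed
    thus ?thesis using lhs rhs by (simp add: sum_distrib_left)
  qed
qed

lemma Phi_ch: assumes "W \<subseteq> U" "v \<in> W" "g \<in> ch k (del E W v)"
  shows "Phi v g \<in> ch (Suc k) W"
  unfolding ind_chains_def
proof (intro CollectI allI impI)
  fix \<sigma> assume "Phi v g \<sigma> \<noteq> 0"
  hence v\<sigma>: "v \<in> \<sigma>" and gn: "g (\<sigma> - {v}) \<noteq> 0" by (auto simp: Phi_def split: if_splits)
  hence fa: "\<sigma> - {v} \<in> ind_faces (del E W v) E" "card (\<sigma> - {v}) = k" using assms(3) by (auto simp: ind_chains_def)
  have sub: "\<sigma> - {v} \<subseteq> W - insert v (Collect (E v))" using fa(1) by (simp add: ind_faces_def del_def)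
  have "\<sigma> - {v} \<subseteq> U" using sub assms(1) by blast
  hence fin: "finite (\<sigma> - {v})" by (rule finite_subset[OF _ finU])
  have "\<sigma> \<subseteq> W" using sub v\<sigma> assms(2) by auto
  moreover have "\<forall>x\<in>\<sigma>. \<forall>y\<in>\<sigma>. \<not> E x y"
  proof (intro ballI)
    fix x y assume xy: "x \<in> \<sigma>" "y \<in> \<sigma>"
    show "\<not> E x y"
    proof (cases "x = v \<or> y = v")
      case True thus ?thesis using xy sub irrE symE by auto
    next
      case False thus ?thesis using xy fa(1) by (auto simp: ind_faces_def)
    qed
  qed
  moreover have "card \<sigma> = Suc k"
  proof -
    have "\<sigma> = insert v (\<sigma> - {v})" using v\<sigma> by auto
    thus ?thesis using fin fa(2) by (metis card_insert_disjoint Diff_iff singletonI)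
  qed
  ultimately show "\<sigma> \<in> ind_faces W E \<and> card \<sigma> = Suc k" by (simp add: ind_faces_def)
qed

end

definition Dm :: "'a::linorder \<Rightarrow> ('a set \<Rightarrow> 'k::field) \<Rightarrow> ('a set \<Rightarrow> 'k)" where
  "Dm v g = (\<lambda>\<rho>. if v \<notin> \<rho> then (-1)^card {u\<in>\<rho>. u < v} * eps v \<rho> * g \<rho> else 0)"

lemma Dm_hom: "module_hom sc sc (Dm v :: ('a::linorder set \<Rightarrow> 'k::field) \<Rightarrow> _)"
  by (rule hom_intro) (auto simp: Dm_def fun_eq_iff algebra_simps)

lemma Dm_inj: "inj_on (Dm v :: ('a::linorder set \<Rightarrow> 'k::field) \<Rightarrow> _) (Av v)"
proof (rule inj_onI)
  fix g h :: "'a set \<Rightarrow> 'k" assume gh: "g \<in> Av v" "h \<in> Av v" "Dm v g = Dm v h"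
  show "g = h"
  proof
    fix \<rho>
    show "g \<rho> = h \<rho>"
    proof (cases "v \<in> \<rho>")
      case True thus ?thesis using gh by (simp add: Av_def)
    next
      case False
      have "Dm v g \<rho> = Dm v h \<rho>" using gh by simp
      thus ?thesis using False by (simp add: Dm_def eps_nz)
    qed
  qed
qed

lemma AU_Dm: "g \<in> AU U \<Longrightarrow> Dm v g \<in> AU U"
  unfolding AU_def Dm_def by (auto split: if_splits)

context gctx begin

lemma proj_in_Av: "h \<in> Av v \<Longrightarrow> proj_in v h = 0"
  by (auto simp: Av_def proj_in_def fun_eq_iff)

lemma FS_fin: "finite (ind ` Pow U)" using finU by simp

lemma AU_sub_span: "X \<subseteq> AU U \<Longrightarrow> X \<subseteq> VS.span (ind ` Pow U)"
  using AU_span[OF finU] by blast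

lemma bdch_AU: "W \<subseteq> U \<Longrightarrow> bd ` (ch k W :: ('a set \<Rightarrow> 'k::field) set) \<subseteq> AU U"
  using ch_AU bd_AU by (metis image_subset_iff subsetD)

lemma img_AU: "X \<subseteq> AU U \<Longrightarrow> (\<And>x. x \<in> AU U \<Longrightarrow> f x \<in> AU U) \<Longrightarrow> f ` X \<subseteq> AU U"
  by blast

lemma rankA:
  assumes "W \<subseteq> U" "v \<in> W"
  shows "VS.dim (bd ` (ch (Suc k) (W - {v}) :: ('a set \<Rightarrow> 'k::field) set))
       + VS.dim (bd ` (ch k (del E W v) :: ('a set \<Rightarrow> 'k) set))
       \<le> VS.dim (bd ` (ch (Suc k) W :: ('a set \<Rightarrow> 'k) set))"
proof -
  define S where "S = bd ` (ch (Suc k) W :: ('a set \<Rightarrow> 'k) set)"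
  define L where "L = del E W v"
  have vU: "v \<in> U" using assms by auto
  have LU: "L \<subseteq> U" "v \<notin> L" using assms by (auto simp: L_def del_def)
  have SAU: "S \<subseteq> AU U" unfolding S_def by (rule bdch_AU[OF assms(1)])
  have SF: "S \<subseteq> VS.span (ind ` Pow U)" by (rule AU_sub_span[OF SAU])
  have RN: "VS.dim {x\<in>S. proj_in v x = 0} + VS.dim (proj_in v ` S) \<le> VS.dim S"
    by (rule rank_nullity_le[OF FS_fin SF proj_in_hom])
  have i: "VS.dim (bd ` (ch (Suc k) (W - {v}) :: ('a set \<Rightarrow> 'k) set)) \<le> VS.dim {x\<in>S. proj_in v x = 0}"
  proof (rule dim_mono_fin[OF FS_fin])
    show "{x\<in>S. proj_in v x = 0} \<subseteq> VS.span (ind ` Pow U)" using SF by auto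
    show "bd ` (ch (Suc k) (W - {v}) :: ('a set \<Rightarrow> 'k) set) \<subseteq> {x\<in>S. proj_in v x = 0}"
    proof
      fix x assume "x \<in> bd ` (ch (Suc k) (W - {v}) :: ('a set \<Rightarrow> 'k) set)"
      then obtain f :: "'a set \<Rightarrow> 'k" where f: "f \<in> ch (Suc k) (W - {v})" "x = bd f" by blast
      have "f \<in> ch (Suc k) W" using f ch_mono[of "W - {v}" W] by blast
      moreover have "f \<in> Av v" using f ch_Av[of v "W - {v}"] by blast
      ultimately have "bd f \<in> S" "proj_in v (bd f) = 0" using bd_Av[of f v] proj_in_Av[of "bd f" v] unfolding S_def by auto
      thus "x \<in> {x\<in>S. proj_in v x = 0}" using f by simp
    qed
  qed
  have AvL: "bd ` (ch k L :: ('a set \<Rightarrow> 'k) set) \<subseteq> Av v"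
  proof
    fix x assume "x \<in> bd ` (ch k L :: ('a set \<Rightarrow> 'k) set)"
    then obtain g :: "'a set \<Rightarrow> 'k" where "g \<in> ch k L" "x = bd g" by blast
    thus "x \<in> Av v" using ch_Av[OF LU(2)] bd_Av[of g v] by auto
  qed
  have ii: "VS.dim (bd ` (ch k L :: ('a set \<Rightarrow> 'k) set)) \<le> VS.dim (Phi v ` bd ` (ch k L :: ('a set \<Rightarrow> 'k) set))"
  proof (rule dim_inj_image_ge[OF FS_fin _ Phi_hom])
    show "Phi v ` bd ` (ch k L :: ('a set \<Rightarrow> 'k) set) \<subseteq> VS.span (ind ` Pow U)"
      by (rule AU_sub_span, rule img_AU[OF bdch_AU[OF LU(1)]], rule AU_Phi[OF vU])
    have "VS.span (bd ` (ch k L :: ('a set \<Rightarrow> 'k) set)) \<subseteq> Av v"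
      using AvL Av_subspace by (rule VS.span_minimal)
    thus "inj_on (Phi v) (VS.span (bd ` (ch k L :: ('a set \<Rightarrow> 'k) set)))"
      using Phi_inj inj_on_subset by blast
  qed
  have iii: "VS.dim (Phi v ` bd ` (ch k L :: ('a set \<Rightarrow> 'k) set)) \<le> VS.dim (proj_in v ` S)"
  proof (rule dim_mono_fin[OF FS_fin])
    show "proj_in v ` S \<subseteq> VS.span (ind ` Pow U)"
      by (rule AU_sub_span, rule img_AU[OF SAU], rule AU_proj_in)
    show "Phi v ` bd ` (ch k L :: ('a set \<Rightarrow> 'k) set) \<subseteq> proj_in v ` S"
    proof
      fix x assume "x \<in> Phi v ` bd ` (ch k L :: ('a set \<Rightarrow> 'k) set)"
      then obtain g :: "'a set \<Rightarrow> 'k" where g: "g \<in> ch k L" "x = Phi v (bd g)" by blast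
      have "g \<in> AU U" "g \<in> Av v" using g ch_AU[OF LU(1)] ch_Av[OF LU(2)] by blast+
      hence "x = proj_in v (bd (Phi v g))" using Phi_bd[OF vU, of g] g by simp
      moreover have "Phi v g \<in> ch (Suc k) W" using Phi_ch[OF assms] g unfolding L_def by blast
      ultimately show "x \<in> proj_in v ` S" unfolding S_def by blast
    qed
  qed
  show ?thesis using RN i ii iii unfolding S_def L_def by linarith
qed

lemma Dm_bd: assumes "v \<in> U" "g \<in> Av v" shows "proj_out v (bd (Phi v g)) = Dm v g"
proof
  fix \<rho>
  show "proj_out v (bd (Phi v g)) \<rho> = Dm v g \<rho>"
  proof (cases "v \<in> \<rho>")
    case True thus ?thesis by (simp add: proj_out_def Dm_def)
  next
    case False
    have vin: "v \<in> U - \<rho>" using False assms(1) by auto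
    have fin: "finite (U - \<rho>)" using finU by simp
    have "bd (Phi v g) \<rho> = (\<Sum>w\<in>U - \<rho>. (-1) ^ card {u \<in> \<rho>. u < w} * Phi v g (insert w \<rho>))"
      by (simp add: ind_boundary_def)
    also have "\<dots> = (-1) ^ card {u \<in> \<rho>. u < v} * Phi v g (insert v \<rho>)
        + (\<Sum>w\<in>U - \<rho> - {v}. (-1) ^ card {u \<in> \<rho>. u < w} * Phi v g (insert w \<rho>))"
      by (rule sum.remove[OF fin vin])
    also have "(\<Sum>w\<in>U - \<rho> - {v}. (-1) ^ card {u \<in> \<rho>. u < w} * Phi v g (insert w \<rho>)) = 0"
      using False by (intro sum.neutral) (auto simp: Phi_def)
    also have "Phi v g (insert v \<rho>) = eps v \<rho> * g \<rho>"
    proof -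
      have "insert v \<rho> - {v} = \<rho>" using False by auto
      thus ?thesis by (simp add: Phi_def)
    qed
    finally show ?thesis using False by (simp add: proj_out_def Dm_def mult.assoc)
  qed
qed

lemma rankB:
  assumes "W \<subseteq> U" "v \<in> W" "\<forall>u\<in>W. \<not> E v u"
  shows "card (Fk (W - {v}) E k) \<le> VS.dim (bd ` (ch (Suc k) W :: ('a set \<Rightarrow> 'k::field) set))"
proof -
  define S where "S = bd ` (ch (Suc k) W :: ('a set \<Rightarrow> 'k) set)"
  define L where "L = W - {v}"
  have delL: "del E W v = L" using assms(3) irrE unfolding L_def del_def by auto
  have vU: "v \<in> U" using assms by auto
  have LU: "L \<subseteq> U" "v \<notin> L" using assms by (auto simp: L_def)
  have SAU: "S \<subseteq> AU U" unfolding S_def by (rule bdch_AU[OF assms(1)])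
  have SF: "S \<subseteq> VS.span (ind ` Pow U)" by (rule AU_sub_span[OF SAU])
  have d0: "VS.dim (ch k L :: ('a set \<Rightarrow> 'k) set) = card (Fk L E k)" by (rule dim_ch[OF LU(1)])
  have i: "VS.dim (ch k L :: ('a set \<Rightarrow> 'k) set) \<le> VS.dim (Dm v ` (ch k L :: ('a set \<Rightarrow> 'k) set))"
  proof (rule dim_inj_image_ge[OF FS_fin _ Dm_hom])
    show "Dm v ` (ch k L :: ('a set \<Rightarrow> 'k) set) \<subseteq> VS.span (ind ` Pow U)"
      by (rule AU_sub_span, rule img_AU[OF ch_AU[OF LU(1)]], rule AU_Dm)
    have "VS.span (ch k L :: ('a set \<Rightarrow> 'k) set) = ch k L" using ch_subspace VS.span_eq_iff by blast
    thus "inj_on (Dm v) (VS.span (ch k L :: ('a set \<Rightarrow> 'k) set))"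
      using Dm_inj inj_on_subset ch_Av[OF LU(2)] by metis
  qed
  have ii: "VS.dim (Dm v ` (ch k L :: ('a set \<Rightarrow> 'k) set)) \<le> VS.dim (proj_out v ` S)"
  proof (rule dim_mono_fin[OF FS_fin])
    show "proj_out v ` S \<subseteq> VS.span (ind ` Pow U)"
      by (rule AU_sub_span, rule img_AU[OF SAU], rule AU_proj_out)
    show "Dm v ` (ch k L :: ('a set \<Rightarrow> 'k) set) \<subseteq> proj_out v ` S"
    proof
      fix x assume "x \<in> Dm v ` (ch k L :: ('a set \<Rightarrow> 'k) set)"
      then obtain g :: "'a set \<Rightarrow> 'k" where g: "g \<in> ch k L" "x = Dm v g" by blast
      have "g \<in> Av v" using g ch_Av[OF LU(2)] by blast
      hence "x = proj_out v (bd (Phi v g))" using Dm_bd[OF vU, of g] g by simp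
      moreover have "Phi v g \<in> ch (Suc k) W" using Phi_ch[OF assms(1,2)] g delL by blast
      ultimately show "x \<in> proj_out v ` S" unfolding S_def by blast
    qed
  qed
  have iii: "VS.dim (proj_out v ` S) \<le> VS.dim S" by (rule dim_image_le_fin[OF FS_fin SF proj_out_hom])
  show ?thesis using d0 i ii iii unfolding S_def L_def by linarith
qed

end

context gctx begin

definition rkk :: "'k::field itself \<Rightarrow> nat \<Rightarrow> 'a set \<Rightarrow> nat" where
  "rkk K k W = VS.dim (bd ` (ch k W :: ('a set \<Rightarrow> 'k) set))"

definition cF :: "nat \<Rightarrow> 'a set \<Rightarrow> nat" where
  "cF k W = card (Fk W E k)"

definition betaW :: "'k::field itself \<Rightarrow> 'a set \<Rightarrow> real" where
  "betaW K W = real (\<Sum>k\<le>Suc (card U). cF k W) - 2 * real (\<Sum>k\<le>Suc (card U). rkk K k W)"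

lemma rkk0: "W \<subseteq> U \<Longrightarrow> rkk K 0 W = 0"
  unfolding rkk_def by (rule dim_le_zero_set) (use ch0 in blast)

lemma rkkN: "W \<subseteq> U \<Longrightarrow> card U < k \<Longrightarrow> rkk K k W = 0"
  unfolding rkk_def
proof (rule dim_le_zero_set)
  assume "W \<subseteq> U" "card U < k"
  hence "ch k W \<subseteq> {0}" by (rule chN)
  moreover have "bd 0 = 0" using module_hom.zero[OF bd_hom] by simp
  ultimately show "bd ` ch k W \<subseteq> {0}" by auto
qed

lemma cFN: "W \<subseteq> U \<Longrightarrow> card U < k \<Longrightarrow> cF k W = 0"
proof -
  assume h: "W \<subseteq> U" "card U < k"
  have "Fk W E k = {}"
  proof (rule ccontr)
    assume "Fk W E k \<noteq> {}"
    then obtain \<sigma> where "\<sigma> \<in> ind_faces W E" "card \<sigma> = k" by (auto simp: Fk_def)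
    hence "\<sigma> \<subseteq> U" "card \<sigma> = k" using h faces_sub by blast+
    hence "card \<sigma> \<le> card U" using card_mono[OF finU] by blast
    thus False using h \<open>card \<sigma> = k\<close> by linarith
  qed
  thus ?thesis by (simp add: cF_def)
qed

lemma Fk0: "W \<subseteq> U \<Longrightarrow> Fk W E 0 = {{}}"
proof
  assume W: "W \<subseteq> U"
  show "Fk W E 0 \<subseteq> {{}}"
  proof
    fix \<sigma> assume "\<sigma> \<in> Fk W E 0"
    hence "\<sigma> \<in> ind_faces W E" "card \<sigma> = 0" by (auto simp: Fk_def)
    moreover have "finite \<sigma>" using faces_finite[OF W] calculation(1) by blast
    ultimately show "\<sigma> \<in> {{}}" by simp
  qed
  show "{{}} \<subseteq> Fk W E 0" by (auto simp: Fk_def ind_faces_def)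
qed

lemma Fk_split: assumes "W \<subseteq> U" "v \<in> W"
  shows "cF (Suc k) W = cF (Suc k) (W - {v}) + cF k (del E W v)"
proof -
  define L where "L = del E W v"
  have vL: "v \<notin> L" by (simp add: L_def del_def)
  have finF: "finite (Fk X E j)" if "X \<subseteq> U" for X j
  proof (rule finite_subset[of _ "Pow U"])
    show "Fk X E j \<subseteq> Pow U" using that by (auto simp: Fk_def ind_faces_def)
  qed (simp add: finU)
  have LU: "L \<subseteq> U" "W - {v} \<subseteq> U" using assms by (auto simp: L_def del_def)
  have eq: "Fk W E (Suc k) = Fk (W - {v}) E (Suc k) \<union> insert v ` Fk L E k"
  proof
    show "Fk W E (Suc k) \<subseteq> Fk (W - {v}) E (Suc k) \<union> insert v ` Fk L E k"
    proof
      fix \<sigma> assume s: "\<sigma> \<in> Fk W E (Suc k)"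
      hence fa: "\<sigma> \<in> ind_faces W E" "card \<sigma> = Suc k" by (auto simp: Fk_def)
      have fin: "finite \<sigma>" using faces_finite[OF assms(1) fa(1)] .
      show "\<sigma> \<in> Fk (W - {v}) E (Suc k) \<union> insert v ` Fk L E k"
      proof (cases "v \<in> \<sigma>")
        case False thus ?thesis using fa by (auto simp: Fk_def ind_faces_def)
      next
        case True
        have "\<sigma> - {v} \<in> Fk L E k"
        proof -
          have "\<forall>x\<in>\<sigma>. \<not> E v x" using fa True by (auto simp: ind_faces_def)
          hence "\<sigma> - {v} \<subseteq> L" using fa by (auto simp: L_def del_def ind_faces_def)
          moreover have "card (\<sigma> - {v}) = k" using fa True fin by simp
          ultimately show ?thesis using fa by (auto simp: Fk_def ind_faces_def)
        qed
        moreover have "\<sigma> = insert v (\<sigma> - {v})" using True by auto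
        ultimately show ?thesis by blast
      qed
    qed
    show "Fk (W - {v}) E (Suc k) \<union> insert v ` Fk L E k \<subseteq> Fk W E (Suc k)"
    proof
      fix \<sigma> assume "\<sigma> \<in> Fk (W - {v}) E (Suc k) \<union> insert v ` Fk L E k"
      thus "\<sigma> \<in> Fk W E (Suc k)"
      proof
        assume "\<sigma> \<in> Fk (W - {v}) E (Suc k)" thus ?thesis by (auto simp: Fk_def ind_faces_def)
      next
        assume "\<sigma> \<in> insert v ` Fk L E k"
        then obtain \<rho> where r: "\<rho> \<in> Fk L E k" "\<sigma> = insert v \<rho>" by blast
        have fa: "\<rho> \<in> ind_faces L E" "card \<rho> = k" using r by (auto simp: Fk_def)
        have fin: "finite \<rho>" using faces_finite[OF LU(1) fa(1)] .
        have sub: "\<rho> \<subseteq> W - insert v (Collect (E v))" using fa(1) by (simp add: ind_faces_def L_def del_def)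
        have ind: "\<forall>x\<in>\<rho>. \<forall>y\<in>\<rho>. \<not> E x y" using fa(1) by (simp add: ind_faces_def)
        have "insert v \<rho> \<subseteq> W" using sub assms(2) by auto
        moreover have "\<forall>x\<in>insert v \<rho>. \<forall>y\<in>insert v \<rho>. \<not> E x y"
          using ind sub irrE symE by auto
        moreover have "v \<notin> \<rho>" using sub by auto
        hence "card (insert v \<rho>) = Suc k" using fin fa(2) by simp
        ultimately show ?thesis using r by (simp add: Fk_def ind_faces_def)
      qed
    qed
  qed
  have disj: "Fk (W - {v}) E (Suc k) \<inter> insert v ` Fk L E k = {}"
    by (auto simp: Fk_def ind_faces_def)
  have inj: "inj_on (insert v) (Fk L E k)"
  proof (rule inj_onI)
    fix a b assume "a \<in> Fk L E k" "b \<in> Fk L E k" "insert v a = insert v b"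
    moreover have "v \<notin> a" "v \<notin> b" using calculation vL by (auto simp: Fk_def ind_faces_def)
    ultimately show "a = b" by (metis insert_ident)
  qed
  have "cF (Suc k) W = card (Fk (W - {v}) E (Suc k)) + card (insert v ` Fk L E k)"
    unfolding cF_def eq using finF[OF LU(2)] finF[OF LU(1)] disj by (simp add: card_Un_disjoint)
  also have "card (insert v ` Fk L E k) = cF k L" unfolding cF_def using card_image[OF inj] .
  finally show ?thesis by (simp add: cF_def L_def)
qed

end

context gctx begin

lemma beta_A: assumes "W \<subseteq> U" "v \<in> W"
  shows "betaW K W \<le> betaW K (W - {v}) + betaW K (del E W v)"
proof -
  define n where "n = card U"
  define L where "L = del E W v"
  have LU: "L \<subseteq> U" "W - {v} \<subseteq> U" using assms by (auto simp: L_def del_def)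
  have c0: "cF 0 W = cF 0 (W - {v})" using Fk0[OF assms(1)] Fk0[OF LU(2)] by (simp add: cF_def)
  have cs: "\<And>k. cF (Suc k) W = cF (Suc k) (W - {v}) + cF k L"
    using Fk_split[OF assms] by (simp add: L_def)
  have cLN: "cF (Suc n) L = 0" using cFN[OF LU(1)] by (simp add: n_def)
  have sumC: "(\<Sum>k\<le>Suc n. cF k W) = (\<Sum>k\<le>Suc n. cF k (W - {v})) + (\<Sum>k\<le>Suc n. cF k L)"
  proof -
    have "(\<Sum>k\<le>Suc n. cF k W) = cF 0 W + (\<Sum>k\<le>n. cF (Suc k) W)" by (rule sum.atMost_Suc_shift)
    also have "\<dots> = cF 0 (W - {v}) + (\<Sum>k\<le>n. cF (Suc k) (W - {v})) + (\<Sum>k\<le>n. cF k L)"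
      using c0 cs by (simp add: sum.distrib)
    also have "cF 0 (W - {v}) + (\<Sum>k\<le>n. cF (Suc k) (W - {v})) = (\<Sum>k\<le>Suc n. cF k (W - {v}))"
      by (rule sum.atMost_Suc_shift[symmetric])
    also have "(\<Sum>k\<le>n. cF k L) = (\<Sum>k\<le>Suc n. cF k L)" using cLN by simp
    finally show ?thesis .
  qed
  have r0: "rkk K 0 (W - {v}) = 0" by (rule rkk0[OF LU(2)])
  have rLN: "rkk K (Suc n) L = 0" by (rule rkkN[OF LU(1)]) (simp add: n_def)
  have rs: "\<And>k. rkk K (Suc k) (W - {v}) + rkk K k L \<le> rkk K (Suc k) W"
    using rankA[OF assms] unfolding rkk_def L_def by blast
  have sumR: "(\<Sum>k\<le>Suc n. rkk K k (W - {v})) + (\<Sum>k\<le>Suc n. rkk K k L) \<le> (\<Sum>k\<le>Suc n. rkk K k W)"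
  proof -
    have "(\<Sum>k\<le>Suc n. rkk K k (W - {v})) = (\<Sum>k\<le>n. rkk K (Suc k) (W - {v}))"
      using r0 by (subst sum.atMost_Suc_shift) simp
    moreover have "(\<Sum>k\<le>Suc n. rkk K k L) = (\<Sum>k\<le>n. rkk K k L)" using rLN by simp
    moreover have "(\<Sum>k\<le>n. rkk K (Suc k) (W - {v})) + (\<Sum>k\<le>n. rkk K k L) \<le> (\<Sum>k\<le>n. rkk K (Suc k) W)"
      using rs by (simp add: sum.distrib[symmetric] sum_mono)
    moreover have "(\<Sum>k\<le>n. rkk K (Suc k) W) \<le> (\<Sum>k\<le>Suc n. rkk K k W)"
      by (subst sum.atMost_Suc_shift) simp
    ultimately show ?thesis by linarith
  qed
  have R1: "real (\<Sum>k\<le>Suc n. cF k W) = real (\<Sum>k\<le>Suc n. cF k (W - {v})) + real (\<Sum>k\<le>Suc n. cF k L)"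
    by (simp only: sumC of_nat_add)
  have R2: "real (\<Sum>k\<le>Suc n. rkk K k (W - {v})) + real (\<Sum>k\<le>Suc n. rkk K k L) \<le> real (\<Sum>k\<le>Suc n. rkk K k W)"
    by (simp only: of_nat_add[symmetric] of_nat_le_iff sumR)
  show ?thesis unfolding betaW_def n_def[symmetric] L_def[symmetric]
    using R1 R2 by linarith
qed

lemma beta_B: assumes "W \<subseteq> U" "v \<in> W" "\<forall>u\<in>W. \<not> E v u"
  shows "betaW K W \<le> 0"
proof -
  define n where "n = card U"
  have LU: "W - {v} \<subseteq> U" using assms by auto
  have delL: "del E W v = W - {v}" unfolding del_def using assms(3) irrE by blast
  have c0: "cF 0 W = cF 0 (W - {v})" using Fk0[OF assms(1)] Fk0[OF LU] by (simp add: cF_def)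
  have cs: "\<And>k. cF (Suc k) W = cF (Suc k) (W - {v}) + cF k (W - {v})"
    using Fk_split[OF assms(1,2)] delL by simp
  have cLN: "cF (Suc n) (W - {v}) = 0" using cFN[OF LU] by (simp add: n_def)
  define X where "X = (\<Sum>k\<le>Suc n. cF k (W - {v}))"
  have sumC: "(\<Sum>k\<le>Suc n. cF k W) = 2 * X"
  proof -
    have "(\<Sum>k\<le>Suc n. cF k W) = cF 0 W + (\<Sum>k\<le>n. cF (Suc k) W)" by (rule sum.atMost_Suc_shift)
    also have "\<dots> = cF 0 (W - {v}) + (\<Sum>k\<le>n. cF (Suc k) (W - {v})) + (\<Sum>k\<le>n. cF k (W - {v}))"
      using c0 cs by (simp add: sum.distrib)
    also have "cF 0 (W - {v}) + (\<Sum>k\<le>n. cF (Suc k) (W - {v})) = X"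
      unfolding X_def by (rule sum.atMost_Suc_shift[symmetric])
    also have "(\<Sum>k\<le>n. cF k (W - {v})) = X" unfolding X_def using cLN by simp
    finally show ?thesis by simp
  qed
  have rs: "\<And>k. cF k (W - {v}) \<le> rkk K (Suc k) W"
    using rankB[OF assms] unfolding rkk_def cF_def by blast
  have sumR: "X \<le> (\<Sum>k\<le>Suc n. rkk K k W)"
  proof -
    have "X = (\<Sum>k\<le>n. cF k (W - {v}))" unfolding X_def using cLN by simp
    also have "\<dots> \<le> (\<Sum>k\<le>n. rkk K (Suc k) W)" using rs by (rule sum_mono)
    also have "\<dots> \<le> (\<Sum>k\<le>Suc n. rkk K k W)" by (subst sum.atMost_Suc_shift) simp
    finally show ?thesis .
  qed
  have R1: "real (\<Sum>k\<le>Suc n. cF k W) = 2 * real X" by (simp only: sumC of_nat_mult of_nat_numeral)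
  have R2: "real X \<le> real (\<Sum>k\<le>Suc n. rkk K k W)" by (simp only: of_nat_le_iff sumR)
  show ?thesis unfolding betaW_def n_def[symmetric] using R1 R2 by linarith
qed

lemma beta_C: "betaW K {} \<le> 1"
proof -
  have fa: "ind_faces {} E = {{}}" by (auto simp: ind_faces_def)
  have "Fk {} E 0 = {{}}" unfolding Fk_def fa by auto
  hence c0: "cF 0 {} = 1" unfolding cF_def by simp
  have cs: "cF (Suc k) {} = 0" for k unfolding cF_def Fk_def fa by simp
  have "(\<Sum>k\<le>Suc (card U). cF k {}) = 1"
    by (subst sum.atMost_Suc_shift) (simp add: c0 cs)
  hence "real (\<Sum>k\<le>Suc (card U). cF k {}) = 1" by simp
  moreover have "0 \<le> real (\<Sum>k\<le>Suc (card U). rkk K k {})" by (rule of_nat_0_le_iff)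
  ultimately show ?thesis unfolding betaW_def by linarith
qed

lemma translation:
  "real (total_red_betti (K :: 'k::field itself) U E) \<le> betaW K U"
proof -
  define n where "n = card U"
  have UU: "U \<subseteq> U" by simp
  have each: "int (red_betti K U E k) \<le> int (cF k U) - int (rkk K k U) - int (rkk K (Suc k) U)" for k
  proof -
    define Z where "Z = {f :: 'a set \<Rightarrow> 'k. f \<in> ch k U \<and> bd f = 0}"
    have rb: "red_betti K U E k = VS.dim Z - rkk K (Suc k) U"
      unfolding red_betti_def Z_def rkk_def by simp
    have chF: "(ch k U :: ('a set \<Rightarrow> 'k) set) \<subseteq> VS.span (ind ` Pow U)" by (rule ch_span[OF UU])
    have RN: "VS.dim {x\<in>(ch k U :: ('a set \<Rightarrow> 'k) set). bd x = 0} + VS.dim (bd ` (ch k U :: ('a set \<Rightarrow> 'k) set))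
        \<le> VS.dim (ch k U :: ('a set \<Rightarrow> 'k) set)"
      by (rule rank_nullity_le[OF FS_fin chF bd_hom])
    have Zeq: "{x\<in>(ch k U :: ('a set \<Rightarrow> 'k) set). bd x = 0} = Z" unfolding Z_def by auto
    have d: "VS.dim (ch k U :: ('a set \<Rightarrow> 'k) set) = cF k U" unfolding cF_def by (rule dim_ch[OF UU])
    have BZ: "rkk K (Suc k) U \<le> VS.dim Z"
      unfolding rkk_def
    proof (rule dim_mono_fin[OF FS_fin])
      show "Z \<subseteq> VS.span (ind ` Pow U)" using chF unfolding Z_def by auto
      show "bd ` (ch (Suc k) U :: ('a set \<Rightarrow> 'k) set) \<subseteq> Z"
      proof
        fix x assume "x \<in> bd ` (ch (Suc k) U :: ('a set \<Rightarrow> 'k) set)"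
        then obtain f :: "'a set \<Rightarrow> 'k" where f: "f \<in> ch (Suc k) U" "x = bd f" by blast
        have "bd f \<in> ch k U" by (rule bd_ch[OF UU f(1)])
        moreover have "f \<in> AU U" using ch_AU[OF UU] f(1) by blast
        hence "bd (bd f) = 0" by (rule bdbd)
        ultimately show "x \<in> Z" unfolding Z_def using f by simp
      qed
    qed
    have RN': "VS.dim Z + rkk K k U \<le> cF k U" using RN Zeq d unfolding rkk_def by simp
    have I1: "int (red_betti K U E k) = int (VS.dim Z) - int (rkk K (Suc k) U)"
      using rb BZ by (simp add: of_nat_diff)
    have I2: "int (VS.dim Z) + int (rkk K k U) \<le> int (cF k U)"
      by (simp only: of_nat_add[symmetric] of_nat_le_iff RN')
    show ?thesis using I1 I2 by linarith
  qed
  have "int (total_red_betti K U E) = (\<Sum>k\<le>n. int (red_betti K U E k))"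
    unfolding total_red_betti_def n_def by (simp add: atLeast0AtMost)
  also have "\<dots> \<le> (\<Sum>k\<le>n. int (cF k U) - int (rkk K k U) - int (rkk K (Suc k) U))"
    using each by (rule sum_mono)
  also have "\<dots> = int (\<Sum>k\<le>Suc n. cF k U) - 2 * int (\<Sum>k\<le>Suc n. rkk K k U)"
  proof -
    have a: "(\<Sum>k\<le>Suc n. cF k U) = (\<Sum>k\<le>n. cF k U)" using cFN[OF UU, of "Suc n"] by (simp add: n_def)
    have "rkk K (Suc n) U = 0" by (rule rkkN[OF UU]) (simp add: n_def)
    hence b: "(\<Sum>k\<le>Suc n. rkk K k U) = (\<Sum>k\<le>n. rkk K k U)" by simp
    have c: "(\<Sum>k\<le>Suc n. rkk K k U) = (\<Sum>k\<le>n. rkk K (Suc k) U)" using rkk0[OF UU] by (subst sum.atMost_Suc_shift) simp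
    have e1: "(\<Sum>k\<le>n. int (cF k U)) = int (\<Sum>k\<le>Suc n. cF k U)" by (simp only: a of_nat_sum)
    have e2: "(\<Sum>k\<le>n. int (rkk K k U)) = int (\<Sum>k\<le>Suc n. rkk K k U)" by (simp only: b of_nat_sum)
    have e3: "(\<Sum>k\<le>n. int (rkk K (Suc k) U)) = int (\<Sum>k\<le>Suc n. rkk K k U)" by (simp only: c of_nat_sum)
    have e4: "(\<Sum>k\<le>n. int (cF k U) - int (rkk K k U) - int (rkk K (Suc k) U))
      = (\<Sum>k\<le>n. int (cF k U)) - (\<Sum>k\<le>n. int (rkk K k U)) - (\<Sum>k\<le>n. int (rkk K (Suc k) U))"
      by (simp only: sum_subtractf)
    show ?thesis using e1 e2 e3 e4 by linarith
  qed
  finally have "int (total_red_betti K U E) \<le> int (\<Sum>k\<le>Suc n. cF k U) - 2 * int (\<Sum>k\<le>Suc n. rkk K k U)" .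
  hence "real (total_red_betti K U E) \<le> real (\<Sum>k\<le>Suc n. cF k U) - 2 * real (\<Sum>k\<le>Suc n. rkk K k U)"
    by linarith
  thus ?thesis unfolding betaW_def n_def .
qed

end

theorem proposition6p5:
  fixes V :: "'a::linorder set" and E :: "'a \<Rightarrow> 'a \<Rightarrow> bool"
  assumes "simple_graph V E" and "triangle_free V E"
  shows "real (total_red_betti TYPE('k::field) V E) \<le> Gamma4 ^ card V"
proof -
  interpret g: gctx V E by unfold_locales (rule assms(1))
  interpret c: comb V E "g.betaW TYPE('k)"
  proof unfold_locales
    show "finite V" by (rule g.finU)
    show "\<And>x y. E x y \<Longrightarrow> E y x" by (rule g.symE)
    show "\<And>x. \<not> E x x" by (rule g.irrE)
    show "\<And>x y z. x \<in> V \<Longrightarrow> y \<in> V \<Longrightarrow> z \<in> V \<Longrightarrow> E x y \<Longrightarrow> E y z \<Longrightarrow> \<not> E x z"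
      using assms(2) unfolding triangle_free_def by blast
    show "\<And>W v. W \<subseteq> V \<Longrightarrow> v \<in> W \<Longrightarrow> g.betaW TYPE('k) W \<le> g.betaW TYPE('k) (W - {v}) + g.betaW TYPE('k) (del E W v)"
      by (rule g.beta_A)
    show "\<And>W v. W \<subseteq> V \<Longrightarrow> v \<in> W \<Longrightarrow> \<forall>u\<in>W. \<not> E v u \<Longrightarrow> g.betaW TYPE('k) W \<le> 0"
      by (rule g.beta_B)
    show "g.betaW TYPE('k) {} \<le> 1" by (rule g.beta_C)
  qed
  have "real (total_red_betti TYPE('k) V E) \<le> g.betaW TYPE('k) V" by (rule g.translation)
  also have "\<dots> \<le> Gamma4 ^ card V" by (rule c.comb_main[OF order_refl])
  finally show ?thesis .
qed

end
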